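(* Let $m\ge1$ and $0\le q\le m(m-1)/2$ be integers. (i) If a sequence $(\mu^{(n)})\subset\mathcal H^{\rm loc}_{q,m}$ converges algebraically to $\mu^{(\infty)}\in\mathcal H^{\rm loc}_m$, then it converges infinitesimally to $\mu^{(\infty)}$. (ii) The converse of (i) is false: there exist sequences in $\mathcal H^{\rm loc}_{q,m}$ (for suitable $q,m$) which converge infinitesimally to some $\mu^{(\infty)}\in\mathcal H^{\rm loc}_m$ but do not converge algebraically to it.
   Context: Notation. For $0\le q\le m(m-1)/2$ write $\mathbb R^{q+m}=\mathbb R^q\oplus\mathbb R^m$ with standard inner product $\langle\cdot,\cdot\rangle_{\rm st}$ on $\mathbb R^m$. Let $\mathcal V_{q,m}$ be the quotient of the space $\Lambda^2(\mathbb R^{q+m})^*\otimes\mathbb R^{q+m}$ of skew-symmetric brackets on $\mathbb R^{q+m}$ by the change-of-basis action of $\mathrm{GL}(q)\times\mathrm O(m)$ (block-diagonal in $\mathrm{GL}(q+m)$), with the quotient ("standard") topology. $\mathcal H^{\rm loc}_{q,m}\subset\mathcal V_{q,m}$ is the set of classes of brackets $\mu$ such that: (h1) $\mu$ satisfies the Jacobi identity, $\mu(\mathbb R^q,\mathbb R^q)\subset\mathbb R^q$, $\mu(\mathbb R^q,\mathbb R^m)\subset\mathbb R^m$; (h2) $\langle\mu(Z,X),Y\rangle_{\rm st}+\langle X,\mu(Z,Y)\rangle_{\rm st}=0$ for $X,Y\in\mathbb R^m$, $Z\in\mathbb R^q$; (h3) no nonzero $Z\in\mathbb R^q$ satisfies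 $\mu(Z,\mathbb R^m)=0$. $\mathcal H^{\rm loc}_m=\bigcup_q\mathcal H^{\rm loc}_{q,m}$. If $\tilde\mu$ satisfies (h1),(h2) but not (h3), let $\mathbb R^{q-q'}=\{Z\in\mathbb R^q:\tilde\mu(Z,\mathbb R^m)=0\}$ ($0\le q'<q$), choose a complement $\mathbb R^{q'}$ so that $\mathbb R^q=\mathbb R^{q-q'}\oplus\mathbb R^{q'}$, and define the restriction $\tilde\mu_{|q',m}=\mathrm{pr}_{\mathbb R^{q'+m}}\circ\tilde\mu|_{\mathbb R^{q'+m}\times\mathbb R^{q'+m}}$, where $\mathrm{pr}$ is the projection along $\mathbb R^{q-q'}$; then $\tilde\mu_{|q',m}\in\mathcal H^{\rm loc}_{q',m}$. Algebraic convergence. $(\mu^{(n)})\subset\mathcal H^{\rm loc}_{q,m}$ converges algebraically to $\mu^{(\infty)}\in\mathcal H^{\rm loc}_m$ if either (a) $\mu^{(\infty)}\in\mathcal H^{\rm loc}_{q,m}$ and $\mu^{(n)}\to\mu^{(\infty)}$ in $\mathcal V_{q,m}$, or (b) $\mu^{(\infty)}\in\mathcal H^{\rm loc}_{q',m}$ with $q'<q$ and $\mu^{(n)}\to\tilde\mu$ in $\mathcal V_{q,m}$ for some $\tilde\mu\in\mathcal V_{q,m}\setminus\mathcal H^{\rm loc}_{q,m}$ (satisfying (h1),(h2)) with $\tilde\mu_{|q',m}=\mu^{(\infty)}$. Each $\mu\in\mathcal H^{\rm loc}_m$ determines, uniquely up to equivariant local isometry, a locally homogeneous Riemannian $m$-manifold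 $(\mathsf G_\mu/\mathsf H_\mu,g_\mu)$ ($\mathsf G_\mu$ simply connected with Lie algebra $(\mathbb R^{q+m},\mu)$, $\mathsf H_\mu$ the connected subgroup with Lie algebra $\mathbb R^q$) with tangent space at the origin $o$ identified isometrically with $(\mathbb R^m,\langle,\rangle_{\rm st})$. With $\mathrm{Rm}(X\wedge Y)=\nabla_{[X,Y]}-[\nabla_X,\nabla_Y]$, let $\mathrm{Rm}^k(\mu)(X_1,\dots,X_k|Y_1\wedge Y_2)=((\nabla^{g_\mu})^k_{X_1,\dots,X_k}\mathrm{Rm})(Y_1\wedge Y_2)$ at $o$. Let $\imath(m)$ be the maximum Singer invariant of locally homogeneous spaces of dimension $\le m$ (the Singer invariant of $(M,g)$ being the least $k$ with $\mathfrak i(k)=\mathfrak i(k+1)$, where $\mathfrak i(k)=\{A\in\mathfrak{so}(T_pM):A\cdot(\nabla^j\mathrm{Rm})_p=0,\ 0\le j\le k\}$). Infinitesimal convergence. $(\mu^{(n)})$ converges infinitesimally to $\mu^{(\infty)}$ if for every $s\ge\imath(m)+2$ there exist $a_n\in\mathrm O(m)$ with $a_n\cdot\mathrm{Rm}^k(\mu^{(n)})\to\mathrm{Rm}^k(\mu^{(\infty)})$ for all $0\le k\le s$. *)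

theory Defs
  imports "HOL-Analysis.Analysis"
begin

text \<open>A bracket on R^(q+m) is given by its structure constants
  mu i j k = e_k-coefficient of mu(e_i,e_j), indices below q+m; indices 0..q-1
  span R^q, indices q..q+m-1 span R^m (orthonormal basis of the standard inner product).
  Matrices are functions nat => nat => real (row, column).\<close>

type_synonym brk = "nat \<Rightarrow> nat \<Rightarrow> nat \<Rightarrow> real"
type_synonym mat = "nat \<Rightarrow> nat \<Rightarrow> real"
type_synonym tensor = "nat list \<Rightarrow> real"

definition V_space :: "nat \<Rightarrow> nat \<Rightarrow> brk set" where
  "V_space q m = {\<mu>. (\<forall>i j k. \<mu> i j k = - \<mu> j i k) \<and>
     (\<forall>i j k. \<not> (i < q + m \<and> j < q + m \<and> k < q + m) \<longrightarrow> \<mu> i j k = 0)}"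

definition block :: "nat \<Rightarrow> nat \<Rightarrow> mat \<Rightarrow> mat \<Rightarrow> mat" where
  "block q m A B i j = (if i < q \<and> j < q then A i j
     else if q \<le> i \<and> i < q + m \<and> q \<le> j \<and> j < q + m then B (i - q) (j - q) else 0)"

definition is_inverse_pair :: "nat \<Rightarrow> mat \<Rightarrow> mat \<Rightarrow> bool" where
  "is_inverse_pair n A Ai \<longleftrightarrow>
     (\<forall>i<n. \<forall>j<n. (\<Sum>k<n. A i k * Ai k j) = (if i = j then 1 else 0)) \<and>
     (\<forall>i<n. \<forall>j<n. (\<Sum>k<n. Ai i k * A k j) = (if i = j then 1 else 0))"

definition orth :: "nat \<Rightarrow> mat \<Rightarrow> bool" where
  "orth m a \<longleftrightarrow> (\<forall>i<m. \<forall>j<m. (\<Sum>k<m. a k i * a k j) = (if i = j then 1 else 0))"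

definition transp :: "mat \<Rightarrow> mat" where "transp B i j = B j i"

text \<open>The group GL(q) x O(m), as pairs (h, h^-1) of block-diagonal matrices.\<close>
definition grp :: "nat \<Rightarrow> nat \<Rightarrow> (mat \<times> mat) set" where
  "grp q m = {(block q m A B, block q m Ai (transp B)) | A Ai B.
              is_inverse_pair q A Ai \<and> orth m B}"

text \<open>Change of basis action (h.mu)(X,Y) = h mu(h^-1 X, h^-1 Y).\<close>
definition act :: "nat \<Rightarrow> nat \<Rightarrow> mat \<times> mat \<Rightarrow> brk \<Rightarrow> brk" where
  "act q m g \<mu> i j k = (\<Sum>a<q+m. \<Sum>b<q+m. \<Sum>c<q+m.
       fst g k c * \<mu> a b c * snd g a i * snd g b j)"

definition same_class :: "nat \<Rightarrow> nat \<Rightarrow> brk \<Rightarrow> brk \<Rightarrow> bool" where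
  "same_class q m \<mu> \<nu> \<longleftrightarrow> (\<exists>g\<in>grp q m. act q m g \<mu> = \<nu>)"

definition saturated :: "nat \<Rightarrow> nat \<Rightarrow> brk set \<Rightarrow> bool" where
  "saturated q m W \<longleftrightarrow> (\<forall>\<mu>\<in>W. \<forall>g\<in>grp q m. act q m g \<mu> \<in> W)"

text \<open>Convergence of the classes [mu_n] to [mu] in the quotient topology of V_{q,m}:
  every open set of the quotient containing [mu] (= saturated open set of brackets
  containing mu) eventually contains [mu_n].\<close>
definition V_conv :: "nat \<Rightarrow> nat \<Rightarrow> (nat \<Rightarrow> brk) \<Rightarrow> brk \<Rightarrow> bool" where
  "V_conv q m \<mu>s \<mu> \<longleftrightarrow> (\<forall>W. openin (top_of_set (V_space q m)) W \<and> saturated q m W \<and> \<mu> \<in> W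
       \<longrightarrow> (\<forall>\<^sub>F n in sequentially. \<mu>s n \<in> W))"

definition jacobi :: "nat \<Rightarrow> brk \<Rightarrow> bool" where
  "jacobi N \<mu> \<longleftrightarrow> (\<forall>i<N. \<forall>j<N. \<forall>k<N. \<forall>l<N.
      (\<Sum>d<N. \<mu> i j d * \<mu> d k l + \<mu> j k d * \<mu> d i l + \<mu> k i d * \<mu> d j l) = 0)"

definition H12 :: "nat \<Rightarrow> nat \<Rightarrow> brk \<Rightarrow> bool" where
  "H12 q m \<mu> \<longleftrightarrow> \<mu> \<in> V_space q m \<and> jacobi (q + m) \<mu> \<and>
     (\<forall>i j k. i < q \<and> j < q \<and> q \<le> k \<and> k < q + m \<longrightarrow> \<mu> i j k = 0) \<and>
     (\<forall>i j k. i < q \<and> q \<le> j \<and> j < q + m \<and> k < q \<longrightarrow> \<mu> i j k = 0) \<and>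
     (\<forall>i j k. i < q \<and> q \<le> j \<and> j < q + m \<and> q \<le> k \<and> k < q + m \<longrightarrow> \<mu> i j k + \<mu> i k j = 0)"

text \<open>Z = sum z_i e_i (i<q) satisfies mu(Z, R^m) = 0.\<close>
definition kills_m :: "nat \<Rightarrow> nat \<Rightarrow> brk \<Rightarrow> (nat \<Rightarrow> real) \<Rightarrow> bool" where
  "kills_m q m \<mu> z \<longleftrightarrow> (\<forall>j k. q \<le> j \<and> j < q + m \<and> k < q + m \<longrightarrow> (\<Sum>i<q. z i * \<mu> i j k) = 0)"

definition Hloc :: "nat \<Rightarrow> nat \<Rightarrow> brk \<Rightarrow> bool" where
  "Hloc q m \<mu> \<longleftrightarrow> 2 * q \<le> m * (m - 1) \<and> H12 q m \<mu> \<and>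
     (\<forall>z. kills_m q m \<mu> z \<longrightarrow> (\<forall>i<q. z i = 0))"

text \<open>restr_rel q m mt q' nu: after a change of basis of R^q in which the kernel
  {Z in R^q : mt(Z,R^m)=0} is spanned by the first q-q' basis vectors (the remaining
  ones spanning the chosen complement R^q'), the restriction mt_{|q',m} lies in the
  class of nu in V_{q',m}.\<close>
definition restr_rel :: "nat \<Rightarrow> nat \<Rightarrow> brk \<Rightarrow> nat \<Rightarrow> brk \<Rightarrow> bool" where
  "restr_rel q m mt q' \<nu> \<longleftrightarrow> q' \<le> q \<and> (\<exists>A Ai. is_inverse_pair q A Ai \<and>
     (let \<rho> = act q m (block q m A (\<lambda>i j. if i = j then 1 else 0),
                       block q m Ai (\<lambda>i j. if i = j then 1 else 0)) mt;
          d = q - q' in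
      (\<forall>z. (\<forall>i\<ge>q. z i = 0) \<longrightarrow> (kills_m q m \<rho> z \<longleftrightarrow> (\<forall>i\<ge>d. z i = 0))) \<and>
      same_class q' m
        (\<lambda>i j k. if i < q' + m \<and> j < q' + m \<and> k < q' + m then \<rho> (i + d) (j + d) (k + d) else 0)
        \<nu>))"

definition alg_conv :: "nat \<Rightarrow> nat \<Rightarrow> (nat \<Rightarrow> brk) \<Rightarrow> nat \<Rightarrow> brk \<Rightarrow> bool" where
  "alg_conv q m \<mu>s q' \<nu> \<longleftrightarrow>
     (Hloc q' m \<nu>) \<and>
     ((q' = q \<and> V_conv q m \<mu>s \<nu>) \<or>
      (q' < q \<and> (\<exists>mt. H12 q m mt \<and> \<not> Hloc q m mt \<and> V_conv q m \<mu>s mt \<and> restr_rel q m mt q' \<nu>)))"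

text \<open>Levi-Civita Nomizu map at o: lam q m mu a b c = c-th component of Lambda(e_a) e_b,
  Lambda(X)Y = 1/2 [X,Y]_m + U(X,Y),
  <U(X,Y),Z> = 1/2 (<[Z,X]_m,Y> + <X,[Z,Y]_m>) (indices a,b,c < m refer to R^m).\<close>
definition lam :: "nat \<Rightarrow> nat \<Rightarrow> brk \<Rightarrow> nat \<Rightarrow> nat \<Rightarrow> nat \<Rightarrow> real" where
  "lam q m \<mu> a b c = \<mu> (q + a) (q + b) (q + c) / 2
     + (\<mu> (q + c) (q + a) (q + b) + \<mu> (q + c) (q + b) (q + a)) / 2"

text \<open>Rm(X/\Y) = nabla_[X,Y] - [nabla_X, nabla_Y] at o, i.e.
  Rm(X/\Y) = Lambda([X,Y]_m) + ad([X,Y]_h)|_m - [Lambda X, Lambda Y].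
  rm0 q m mu y1 y2 z w = w-th component of Rm(e_y1 /\ e_y2) e_z.\<close>
definition rm0 :: "nat \<Rightarrow> nat \<Rightarrow> brk \<Rightarrow> nat \<Rightarrow> nat \<Rightarrow> nat \<Rightarrow> nat \<Rightarrow> real" where
  "rm0 q m \<mu> x y z w =
      (\<Sum>c<m. \<mu> (q + x) (q + y) (q + c) * lam q m \<mu> c z w)
    + (\<Sum>i<q. \<mu> (q + x) (q + y) i * \<mu> i (q + z) (q + w))
    - (\<Sum>v<m. lam q m \<mu> x v w * lam q m \<mu> y z v - lam q m \<mu> y v w * lam q m \<mu> x z v)"

text \<open>Rmk q m k mu [x1,..,xk,y1,y2,z,w] = w-th component of
  ((nabla^k_{x1..xk} Rm)(e_y1 /\ e_y2)) e_z at o. Invariant tensors satisfy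
  nabla_X T = Lambda(X).T (derivation action); the output slot is treated
  covariantly via the standard inner product (Lambda(X) is skew).\<close>
fun Rmk :: "nat \<Rightarrow> nat \<Rightarrow> nat \<Rightarrow> brk \<Rightarrow> tensor" where
  "Rmk q m 0 \<mu> = (\<lambda>l. case l of [x, y, z, w] \<Rightarrow> rm0 q m \<mu> x y z w | _ \<Rightarrow> 0)"
| "Rmk q m (Suc k) \<mu> = (\<lambda>l. case l of [] \<Rightarrow> 0
     | x # r \<Rightarrow> - (\<Sum>p<length r. \<Sum>j<m. lam q m \<mu> x (r ! p) j * Rmk q m k \<mu> (r[p := j])))"

text \<open>Action of a in O(m) on tensors: (a.T)(X_1,...) = T(a^-1 X_1, ...).\<close>
definition act_t :: "nat \<Rightarrow> mat \<Rightarrow> tensor \<Rightarrow> tensor" where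
  "act_t m a T l = (\<Sum>js\<in>{js. length js = length l \<and> set js \<subseteq> {..<m}}.
       (\<Prod>r<length l. a (l ! r) (js ! r)) * T js)"

definition der :: "nat \<Rightarrow> mat \<Rightarrow> tensor \<Rightarrow> tensor" where
  "der m A T l = - (\<Sum>p<length l. \<Sum>i<m. A i (l ! p) * T (l[p := i]))"

definition so :: "nat \<Rightarrow> mat set" where
  "so m = {A. (\<forall>i j. A i j = - A j i) \<and> (\<forall>i j. \<not> (i < m \<and> j < m) \<longrightarrow> A i j = 0)}"

definition iset :: "nat \<Rightarrow> nat \<Rightarrow> brk \<Rightarrow> nat \<Rightarrow> mat set" where
  "iset q m \<mu> k = {A \<in> so m. \<forall>j\<le>k. \<forall>l. length l = j + 4 \<and> set l \<subseteq> {..<m} \<longrightarrow>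
       der m A (Rmk q m j \<mu>) l = 0}"

definition singer :: "nat \<Rightarrow> nat \<Rightarrow> brk \<Rightarrow> nat" where
  "singer q m \<mu> = (LEAST k. iset q m \<mu> k = iset q m \<mu> (Suc k))"

text \<open>imath m: maximum Singer invariant of locally homogeneous spaces of dimension <= m
  (every such space is (G_mu/H_mu, g_mu) for some mu in H^loc).\<close>
definition imath :: "nat \<Rightarrow> nat" where
  "imath m = Sup {singer q' m' \<mu> | q' m' \<mu>. m' \<le> m \<and> Hloc q' m' \<mu>}"

definition inf_conv :: "nat \<Rightarrow> nat \<Rightarrow> (nat \<Rightarrow> brk) \<Rightarrow> nat \<Rightarrow> brk \<Rightarrow> bool" where
  "inf_conv q m \<mu>s q' \<nu> \<longleftrightarrow> (\<forall>s\<ge>imath m + 2. \<exists>a. (\<forall>n. orth m (a n)) \<and>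
     (\<forall>k\<le>s. \<forall>l. length l = k + 4 \<and> set l \<subseteq> {..<m} \<longrightarrow>
        (\<lambda>n. act_t m (a n) (Rmk q m k (\<mu>s n)) l) \<longlonglongrightarrow> Rmk q' m k \<nu> l))"

end

theory Submission
  imports Defs "Jordan_Normal_Form.Determinant"
begin

type_synonym rmat = "nat \<Rightarrow> nat \<Rightarrow> real"


definition Ls :: "nat \<Rightarrow> nat \<Rightarrow> nat list set" where
  "Ls m n = {js. length js = n \<and> set js \<subseteq> {..<m}}"

lemma finite_Ls[simp]: "finite (Ls m n)"
proof -
  have "Ls m n = {xs. set xs \<subseteq> {..<m} \<and> length xs = n}" unfolding Ls_def by auto
  then show ?thesis using finite_lists_length_eq[of "{..<m}" n] by simp
qed

lemma Ls_Suc: "Ls m (Suc n) = (\<lambda>(j,ys). j # ys) ` ({..<m} \<times> Ls m n)"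
  unfolding Ls_def
  by (auto simp: length_Suc_conv image_iff)

lemma Ls_0: "Ls m 0 = {[]}" unfolding Ls_def by auto

lemma act_t_Ls: "act_t m a T l = (\<Sum>js\<in>Ls m (length l). (\<Prod>r<length l. a (l ! r) (js ! r)) * T js)"
  unfolding act_t_def Ls_def by simp

lemma act_t_Nil[simp]: "act_t m a T [] = T []"
  unfolding act_t_Ls by (simp add: Ls_0)

lemma act_t_Cons: "act_t m a T (x # l) = (\<Sum>j<m. a x j * act_t m a (\<lambda>ys. T (j # ys)) l)"
proof -
  have inj: "inj_on (\<lambda>(j,ys). j # ys) ({..<m} \<times> Ls m (length l))"
    by (auto simp: inj_on_def)
  have "act_t m a T (x # l) = (\<Sum>js\<in>Ls m (Suc (length l)). (\<Prod>r<Suc (length l). a ((x # l) ! r) (js ! r)) * T js)"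
    unfolding act_t_Ls by simp
  also have "\<dots> = (\<Sum>p\<in>{..<m} \<times> Ls m (length l). (\<lambda>(j,ys). (\<Prod>r<Suc (length l). a ((x # l) ! r) ((j # ys) ! r)) * T (j # ys)) p)"
    unfolding Ls_Suc by (subst sum.reindex[OF inj]) (auto intro!: sum.cong simp del: prod.lessThan_Suc)
  also have "\<dots> = (\<Sum>j<m. \<Sum>ys\<in>Ls m (length l). (\<Prod>r<Suc (length l). a ((x # l) ! r) ((j # ys) ! r)) * T (j # ys))"
    by (rule sum.cartesian_product[symmetric])
  also have "\<dots> = (\<Sum>j<m. \<Sum>ys\<in>Ls m (length l). a x j * ((\<Prod>r<length l. a (l ! r) (ys ! r)) * T (j # ys)))"
    by (simp only: prod.lessThan_Suc_shift nth_Cons_0 nth_Cons_Suc mult.assoc)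
  also have "\<dots> = (\<Sum>j<m. a x j * act_t m a (\<lambda>ys. T (j # ys)) l)"
    unfolding act_t_Ls by (simp add: sum_distrib_left)
  finally show ?thesis .
qed

lemma act_t_cong:
  assumes "\<And>ys. length ys = length l \<Longrightarrow> set ys \<subseteq> {..<m} \<Longrightarrow> T ys = T' ys"
  shows "act_t m a T l = act_t m a T' l"
  unfolding act_t_Ls using assms by (intro sum.cong) (auto simp: Ls_def)

lemma act_t_sum:
  assumes "finite I"
  shows "act_t m a (\<lambda>ys. \<Sum>i\<in>I. f i ys) l = (\<Sum>i\<in>I. act_t m a (f i) l)"
  unfolding act_t_Ls by (simp add: sum_distrib_left) (rule sum.swap)

lemma act_t_scale: "act_t m a (\<lambda>ys. c * T ys) l = c * act_t m a T l"
  unfolding act_t_Ls by (simp add: sum_distrib_left algebra_simps)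

lemma act_t_minus: "act_t m a (\<lambda>ys. - T ys) l = - act_t m a T l"
  unfolding act_t_Ls by (simp add: sum_negf)

lemma act_t_zero: "act_t m a (\<lambda>ys. 0) l = 0"
  unfolding act_t_Ls by simp

definition idm :: "rmat" where "idm i j = (if i = j then 1 else 0)"

lemma act_t_id: "set l \<subseteq> {..<m} \<Longrightarrow> act_t m idm T l = T l"
proof (induction l arbitrary: T)
  case Nil then show ?case by simp
next
  case (Cons x l)
  have "act_t m idm T (x # l) = (\<Sum>j<m. idm x j * act_t m idm (\<lambda>ys. T (j # ys)) l)"
    by (rule act_t_Cons)
  also have "\<dots> = (\<Sum>j<m. idm x j * T (j # l))" using Cons by simp
  also have "\<dots> = (\<Sum>j<m. if j = x then T (j # l) else 0)" by (intro sum.cong) (auto simp: idm_def)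
  also have "\<dots> = T (x # l)" using Cons.prems by simp
  finally show ?case .
qed

definition mm :: "nat \<Rightarrow> rmat \<Rightarrow> rmat \<Rightarrow> rmat" where
  "mm m A B i j = (\<Sum>k<m. A i k * B k j)"

lemma act_t_comp: "act_t m (mm m A B) T l = act_t m A (act_t m B T) l"
proof (induction l arbitrary: T)
  case Nil then show ?case by simp
next
  case (Cons x l)
  have "act_t m (mm m A B) T (x # l) = (\<Sum>j<m. mm m A B x j * act_t m A (act_t m B (\<lambda>ys. T (j # ys))) l)"
    by (simp add: act_t_Cons Cons)
  also have "\<dots> = (\<Sum>j<m. \<Sum>k<m. A x k * (B k j * act_t m A (act_t m B (\<lambda>ys. T (j # ys))) l))"
    by (simp add: mm_def sum_distrib_right mult.assoc)
  also have "\<dots> = (\<Sum>k<m. \<Sum>j<m. A x k * (B k j * act_t m A (act_t m B (\<lambda>ys. T (j # ys))) l))"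
    by (rule sum.swap)
  also have "\<dots> = (\<Sum>k<m. A x k * (\<Sum>j<m. B k j * act_t m A (act_t m B (\<lambda>ys. T (j # ys))) l))"
    by (simp add: sum_distrib_left)
  also have "\<dots> = (\<Sum>k<m. A x k * act_t m A (\<lambda>ys. act_t m B T (k # ys)) l)"
    by (simp add: act_t_Cons act_t_sum act_t_scale)
  also have "\<dots> = act_t m A (act_t m B T) (x # l)" by (simp add: act_t_Cons)
  finally show ?case .
qed

lemma orth_mm: assumes "orth m A" "orth m B" shows "orth m (mm m A B)"
  unfolding orth_def
proof (intro allI impI)
  fix i j assume ij: "i < m" "j < m"
  have "(\<Sum>k<m. mm m A B k i * mm m A B k j) = (\<Sum>k<m. \<Sum>s<m. \<Sum>t<m. B s i * B t j * (A k s * A k t))"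
    by (simp add: mm_def sum_product algebra_simps)
  also have "\<dots> = (\<Sum>s<m. \<Sum>k<m. \<Sum>t<m. B s i * B t j * (A k s * A k t))"
    by (rule sum.swap)
  also have "\<dots> = (\<Sum>s<m. \<Sum>t<m. \<Sum>k<m. B s i * B t j * (A k s * A k t))"
    by (rule sum.cong[OF refl], rule sum.swap)
  also have "\<dots> = (\<Sum>s<m. \<Sum>t<m. B s i * B t j * (\<Sum>k<m. A k s * A k t))"
    by (simp add: sum_distrib_left)
  also have "\<dots> = (\<Sum>s<m. \<Sum>t<m. B s i * B t j * (if s = t then 1 else 0))"
    using assms(1) unfolding orth_def by (intro sum.cong refl) auto
  also have "\<dots> = (\<Sum>s<m. B s i * B s j)" by (simp add: if_distrib cong: if_cong)
  also have "\<dots> = (if i = j then 1 else 0)" using assms(2) ij unfolding orth_def by auto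
  finally show "(\<Sum>k<m. mm m A B k i * mm m A B k j) = (if i = j then 1 else 0)" .
qed

lemma orth_id: "orth m idm"
proof -
  have "(\<Sum>k<m. idm k i * idm k j) = (\<Sum>k<m. if k = i then idm k j else 0)" for i j
    by (intro sum.cong) (auto simp: idm_def)
  then show ?thesis unfolding orth_def by (auto simp: idm_def)
qed

lemma act_t_tendsto:
  assumes "\<And>ys. (\<lambda>n. Ts n ys) \<longlonglongrightarrow> T ys"
  shows "(\<lambda>n. act_t m a (Ts n) l) \<longlonglongrightarrow> act_t m a T l"
  unfolding act_t_Ls by (intro tendsto_intros assms)



lemma orth_contract:
  assumes "orth m B" "c < m"
  shows "(\<Sum>j<m. B j c * (\<Sum>j'<m. B j j' * X j')) = X c"
proof -
  have "(\<Sum>j<m. B j c * (\<Sum>j'<m. B j j' * X j')) = (\<Sum>j<m. \<Sum>j'<m. B j c * B j j' * X j')"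
    by (simp add: sum_distrib_left mult.assoc)
  also have "\<dots> = (\<Sum>j'<m. \<Sum>j<m. B j c * B j j' * X j')" by (rule sum.swap)
  also have "\<dots> = (\<Sum>j'<m. (\<Sum>j<m. B j c * B j j') * X j')" by (simp add: sum_distrib_right)
  also have "\<dots> = (\<Sum>j'<m. (if c = j' then X j' else 0))"
    using assms unfolding orth_def by (intro sum.cong refl) auto
  also have "\<dots> = X c" using assms(2) by simp
  finally show ?thesis .
qed

definition cnj :: "nat \<Rightarrow> rmat \<Rightarrow> rmat \<Rightarrow> rmat" where
  "cnj m B K b j = (\<Sum>b'<m. \<Sum>c'<m. B b b' * K b' c' * B j c')"

lemma cnj_expand:
  "(\<Sum>j<m. cnj m B K y j * Y j) = (\<Sum>b'<m. \<Sum>c'<m. B y b' * K b' c' * (\<Sum>j<m. B j c' * Y j))"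
proof -
  have "(\<Sum>j<m. cnj m B K y j * Y j) = (\<Sum>j<m. \<Sum>b'<m. \<Sum>c'<m. B y b' * K b' c' * (B j c' * Y j))"
    by (simp add: cnj_def sum_distrib_right mult.assoc)
  also have "\<dots> = (\<Sum>b'<m. \<Sum>j<m. \<Sum>c'<m. B y b' * K b' c' * (B j c' * Y j))" by (rule sum.swap)
  also have "\<dots> = (\<Sum>b'<m. \<Sum>c'<m. \<Sum>j<m. B y b' * K b' c' * (B j c' * Y j))"
    by (rule sum.cong[OF refl], rule sum.swap)
  also have "\<dots> = (\<Sum>b'<m. \<Sum>c'<m. B y b' * K b' c' * (\<Sum>j<m. B j c' * Y j))"
    by (simp add: sum_distrib_left)
  finally show ?thesis .
qed

lemma act_t_slot:
  assumes "orth m B" "set r \<subseteq> {..<m}" "p < length r"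
  shows "act_t m B (\<lambda>ys. \<Sum>j<m. K (ys ! p) j * T (ys[p := j])) r
       = (\<Sum>j<m. cnj m B K (r ! p) j * act_t m B T (r[p := j]))"
  using assms(2,3)
proof (induction r arbitrary: p T)
  case Nil then show ?case by simp
next
  case (Cons y r0)
  show ?case
  proof (cases p)
    case 0
    have "act_t m B (\<lambda>ys. \<Sum>j<m. K (ys ! p) j * T (ys[p := j])) (y # r0)
        = (\<Sum>y'<m. B y y' * act_t m B (\<lambda>ys. \<Sum>j<m. K y' j * T (j # ys)) r0)"
      using 0 by (simp add: act_t_Cons)
    also have "\<dots> = (\<Sum>y'<m. B y y' * (\<Sum>j<m. K y' j * act_t m B (\<lambda>ys. T (j # ys)) r0))"
      by (simp add: act_t_sum act_t_scale)
    also have "\<dots> = (\<Sum>b'<m. \<Sum>c'<m. B y b' * K b' c' * (\<Sum>j<m. B j c' * (\<Sum>j'<m. B j j' * act_t m B (\<lambda>ys. T (j' # ys)) r0)))"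
    proof -
      have "(\<Sum>y'<m. B y y' * (\<Sum>j<m. K y' j * act_t m B (\<lambda>ys. T (j # ys)) r0))
          = (\<Sum>b'<m. \<Sum>c'<m. B y b' * K b' c' * act_t m B (\<lambda>ys. T (c' # ys)) r0)"
        by (simp add: sum_distrib_left mult.assoc)
      also have "\<dots> = (\<Sum>b'<m. \<Sum>c'<m. B y b' * K b' c' * (\<Sum>j<m. B j c' * (\<Sum>j'<m. B j j' * act_t m B (\<lambda>ys. T (j' # ys)) r0)))"
        by (intro sum.cong refl) (simp add: orth_contract[OF assms(1)])
      finally show ?thesis .
    qed
    also have "\<dots> = (\<Sum>j<m. cnj m B K y j * (\<Sum>j'<m. B j j' * act_t m B (\<lambda>ys. T (j' # ys)) r0))"
      by (rule cnj_expand[symmetric])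
    also have "\<dots> = (\<Sum>j<m. cnj m B K ((y # r0) ! p) j * act_t m B T ((y # r0)[p := j]))"
      using 0 by (simp add: act_t_Cons)
    finally show ?thesis .
  next
    case (Suc p')
    have p': "p' < length r0" "set r0 \<subseteq> {..<m}" using Cons.prems Suc by auto
    have "act_t m B (\<lambda>ys. \<Sum>j<m. K (ys ! p) j * T (ys[p := j])) (y # r0)
        = (\<Sum>y'<m. B y y' * act_t m B (\<lambda>ys. \<Sum>j<m. K (ys ! p') j * T (y' # ys[p' := j])) r0)"
      using Suc by (simp add: act_t_Cons)
    also have "\<dots> = (\<Sum>y'<m. B y y' * (\<Sum>j<m. cnj m B K (r0 ! p') j * act_t m B (\<lambda>zs. T (y' # zs)) (r0[p' := j])))"
    proof -
      have IH': "act_t m B (\<lambda>ys. \<Sum>j<m. K (ys ! p') j * T (y' # ys[p' := j])) r0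
          = (\<Sum>j<m. cnj m B K (r0 ! p') j * act_t m B (\<lambda>zs. T (y' # zs)) (r0[p' := j]))" for y'
        using Cons.IH[OF p'(2) p'(1), of "\<lambda>zs. T (y' # zs)"] by simp
      show ?thesis by (simp only: IH')
    qed
    also have "\<dots> = (\<Sum>j<m. cnj m B K (r0 ! p') j * (\<Sum>y'<m. B y y' * act_t m B (\<lambda>zs. T (y' # zs)) (r0[p' := j])))"
    proof -
      have "(\<Sum>y'<m. B y y' * (\<Sum>j<m. cnj m B K (r0 ! p') j * act_t m B (\<lambda>zs. T (y' # zs)) (r0[p' := j])))
         = (\<Sum>y'<m. \<Sum>j<m. cnj m B K (r0 ! p') j * (B y y' * act_t m B (\<lambda>zs. T (y' # zs)) (r0[p' := j])))"
        by (simp add: sum_distrib_left mult.left_commute)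
      also have "\<dots> = (\<Sum>j<m. \<Sum>y'<m. cnj m B K (r0 ! p') j * (B y y' * act_t m B (\<lambda>zs. T (y' # zs)) (r0[p' := j])))"
        by (rule sum.swap)
      finally show ?thesis by (simp add: sum_distrib_left)
    qed
    also have "\<dots> = (\<Sum>j<m. cnj m B K ((y # r0) ! p) j * act_t m B T ((y # r0)[p := j]))"
      using Suc by (simp add: act_t_Cons)
    finally show ?thesis .
  qed
qed



definition Dop :: "nat \<Rightarrow> (nat \<Rightarrow> nat \<Rightarrow> nat \<Rightarrow> real) \<Rightarrow> tensor \<Rightarrow> tensor" where
  "Dop m L T l = (case l of [] \<Rightarrow> 0 | x # r \<Rightarrow> - (\<Sum>p<length r. \<Sum>j<m. L x (r ! p) j * T (r[p := j])))"

lemma Rmk_Suc_Dop: "Rmk q m (Suc k) \<mu> = Dop m (lam q m \<mu>) (Rmk q m k \<mu>)"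
  by (rule ext) (simp add: Dop_def split: list.split)

lemma Dop_equiv:
  assumes B: "orth m B"
    and L': "\<And>x b c. x < m \<Longrightarrow> b < m \<Longrightarrow> c < m \<Longrightarrow> L' x b c = (\<Sum>x'<m. B x x' * cnj m B (L x') b c)"
    and T': "\<And>l. set l \<subseteq> {..<m} \<Longrightarrow> T' l = act_t m B T l"
    and l: "set l \<subseteq> {..<m}"
  shows "Dop m L' T' l = act_t m B (Dop m L T) l"
proof (cases l)
  case Nil then show ?thesis by (simp add: Dop_def)
next
  case (Cons x r)
  have xr: "x < m" "set r \<subseteq> {..<m}" using l Cons by auto
  have setupd: "set (r[p := j]) \<subseteq> {..<m}" if "j < m" for p j
    using xr(2) that set_update_subset_insert[of r p j] by auto
  have rp: "r ! p < m" if "p < length r" for p using xr(2) that nth_mem by blast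
  have "act_t m B (Dop m L T) l = (\<Sum>x'<m. B x x' * act_t m B (\<lambda>ys. Dop m L T (x' # ys)) r)"
    using Cons by (simp add: act_t_Cons)
  also have "\<dots> = (\<Sum>x'<m. B x x' * act_t m B (\<lambda>ys. - (\<Sum>p<length r. \<Sum>j<m. L x' (ys ! p) j * T (ys[p := j]))) r)"
    by (intro sum.cong refl arg_cong2[where f="(*)"] act_t_cong) (simp add: Dop_def)
  also have "\<dots> = (\<Sum>x'<m. B x x' * - (\<Sum>p<length r. act_t m B (\<lambda>ys. \<Sum>j<m. L x' (ys ! p) j * T (ys[p := j])) r))"
    by (simp add: act_t_minus act_t_sum)
  also have "\<dots> = (\<Sum>x'<m. B x x' * - (\<Sum>p<length r. \<Sum>j<m. cnj m B (L x') (r ! p) j * act_t m B T (r[p := j])))"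
    using act_t_slot[OF B xr(2)] by simp
  also have "\<dots> = - (\<Sum>p<length r. \<Sum>j<m. (\<Sum>x'<m. B x x' * cnj m B (L x') (r ! p) j) * act_t m B T (r[p := j]))"
  proof -
    have "(\<Sum>x'<m. B x x' * - (\<Sum>p<length r. \<Sum>j<m. cnj m B (L x') (r ! p) j * act_t m B T (r[p := j])))
        = - (\<Sum>x'<m. \<Sum>p<length r. \<Sum>j<m. B x x' * cnj m B (L x') (r ! p) j * act_t m B T (r[p := j]))"
      by (simp add: sum_distrib_left sum_negf mult.assoc)
    also have "\<dots> = - (\<Sum>p<length r. \<Sum>x'<m. \<Sum>j<m. B x x' * cnj m B (L x') (r ! p) j * act_t m B T (r[p := j]))"
      by (subst sum.swap) (rule refl)
    also have "\<dots> = - (\<Sum>p<length r. \<Sum>j<m. \<Sum>x'<m. B x x' * cnj m B (L x') (r ! p) j * act_t m B T (r[p := j]))"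
      by (subst (2) sum.swap) (rule refl)
    also have "\<dots> = - (\<Sum>p<length r. \<Sum>j<m. (\<Sum>x'<m. B x x' * cnj m B (L x') (r ! p) j) * act_t m B T (r[p := j]))"
      by (simp add: sum_distrib_right)
    finally show ?thesis .
  qed
  also have "\<dots> = Dop m L' T' l"
    using Cons xr rp setupd by (simp add: Dop_def L' T')
  finally show ?thesis by simp
qed


definition rot :: "nat \<Rightarrow> rmat \<Rightarrow> (nat \<Rightarrow> real) \<Rightarrow> nat \<Rightarrow> real" where
  "rot m B f a = (\<Sum>a'<m. B a a' * f a')"

lemma rot_swap: "rot m B (\<lambda>a'. rot m B (\<lambda>b'. F a' b') b) a = rot m B (\<lambda>b'. rot m B (\<lambda>a'. F a' b') a) b"
proof -
  have "rot m B (\<lambda>a'. rot m B (\<lambda>b'. F a' b') b) a = (\<Sum>a'<m. \<Sum>b'<m. B a a' * (B b b' * F a' b'))"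
    unfolding rot_def by (simp add: sum_distrib_left)
  also have "\<dots> = (\<Sum>b'<m. \<Sum>a'<m. B a a' * (B b b' * F a' b'))" by (rule sum.swap)
  also have "\<dots> = rot m B (\<lambda>b'. rot m B (\<lambda>a'. F a' b') a) b"
    unfolding rot_def by (simp add: sum_distrib_left mult.left_commute)
  finally show ?thesis .
qed

lemma rot_cong: "(\<And>a'. a' < m \<Longrightarrow> f a' = g a') \<Longrightarrow> rot m B f a = rot m B g a"
  unfolding rot_def by (intro sum.cong) auto

lemma rot_mult_right: "rot m B f a * X = rot m B (\<lambda>a'. f a' * X) a"
  unfolding rot_def by (simp add: sum_distrib_right mult.assoc)

lemma rot_mult_left: "X * rot m B f a = rot m B (\<lambda>a'. X * f a') a"
  unfolding rot_def by (simp add: sum_distrib_left mult.left_commute)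

lemma rot_sum: "(\<Sum>i\<in>I. rot m B (f i) a) = rot m B (\<lambda>a'. \<Sum>i\<in>I. f i a') a"
  unfolding rot_def by (simp add: sum_distrib_left) (rule sum.swap)

lemma rot_add: "rot m B f a + rot m B g a = rot m B (\<lambda>a'. f a' + g a') a"
  unfolding rot_def by (simp add: sum.distrib algebra_simps)

lemma rot_diff: "rot m B f a - rot m B g a = rot m B (\<lambda>a'. f a' - g a') a"
  unfolding rot_def by (simp add: sum_subtractf algebra_simps)

lemma rot_div: "rot m B f a / d = rot m B (\<lambda>a'. f a' / d) a"
  unfolding rot_def by (simp add: sum_divide_distrib)

lemma rot_inner: assumes "orth m B"
  shows "(\<Sum>c<m. rot m B f c * rot m B g c) = (\<Sum>c<m. f c * g c)"
proof -
  have "(\<Sum>c<m. rot m B f c * rot m B g c) = (\<Sum>c<m. \<Sum>a<m. B c a * f a * rot m B g c)"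
    unfolding rot_def[of m B f] by (simp add: sum_distrib_right)
  also have "\<dots> = (\<Sum>a<m. \<Sum>c<m. B c a * f a * rot m B g c)" by (rule sum.swap)
  also have "\<dots> = (\<Sum>a<m. f a * (\<Sum>c<m. B c a * (\<Sum>b<m. B c b * g b)))"
    unfolding rot_def by (simp add: sum_distrib_left mult_ac)
  also have "\<dots> = (\<Sum>a<m. f a * g a)"
    using orth_contract[OF assms] by (intro sum.cong refl) simp
  finally show ?thesis .
qed

definition r2 :: "nat \<Rightarrow> rmat \<Rightarrow> (nat \<Rightarrow> nat \<Rightarrow> real) \<Rightarrow> nat \<Rightarrow> nat \<Rightarrow> real" where
  "r2 m B F a b = rot m B (\<lambda>a'. rot m B (\<lambda>b'. F a' b') b) a"
definition r3 :: "nat \<Rightarrow> rmat \<Rightarrow> (nat \<Rightarrow> nat \<Rightarrow> nat \<Rightarrow> real) \<Rightarrow> nat \<Rightarrow> nat \<Rightarrow> nat \<Rightarrow> real" where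
  "r3 m B F a b c = rot m B (\<lambda>a'. rot m B (\<lambda>b'. rot m B (\<lambda>c'. F a' b' c') c) b) a"
definition r4 :: "nat \<Rightarrow> rmat \<Rightarrow> (nat \<Rightarrow> nat \<Rightarrow> nat \<Rightarrow> nat \<Rightarrow> real) \<Rightarrow> nat \<Rightarrow> nat \<Rightarrow> nat \<Rightarrow> nat \<Rightarrow> real" where
  "r4 m B F a b c d = rot m B (\<lambda>a'. rot m B (\<lambda>b'. rot m B (\<lambda>c'. rot m B (\<lambda>d'. F a' b' c' d') d) c) b) a"

lemma r3_last_out: "r3 m B F x y c = rot m B (\<lambda>c'. r2 m B (\<lambda>x' y'. F x' y' c') x y) c"
proof -
  have "r3 m B F x y c = rot m B (\<lambda>x'. rot m B (\<lambda>c'. rot m B (\<lambda>y'. F x' y' c') y) c) x"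
    unfolding r3_def by (subst rot_swap) (rule refl)
  also have "\<dots> = rot m B (\<lambda>c'. rot m B (\<lambda>x'. rot m B (\<lambda>y'. F x' y' c') y) x) c"
    by (rule rot_swap)
  finally show ?thesis unfolding r2_def .
qed

lemma r3_first: "r3 m B F x y c = rot m B (\<lambda>x'. r2 m B (F x') y c) x"
  unfolding r3_def r2_def ..

lemma r3_mid_out: "r3 m B F x v w = rot m B (\<lambda>v'. r2 m B (\<lambda>x' w'. F x' v' w') x w) v"
  unfolding r3_def r2_def by (rule rot_swap)

lemma r2_mult_R: "r2 m B F x y * R = rot m B (\<lambda>x'. rot m B (\<lambda>y'. F x' y' * R) y) x"
  unfolding r2_def by (simp only: rot_mult_right)

lemma r2_mult_L: "R * r2 m B G z w = rot m B (\<lambda>z'. rot m B (\<lambda>w'. R * G z' w') w) z"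
  unfolding r2_def by (simp only: rot_mult_left)

lemma r2_mult: "r2 m B F x y * r2 m B G z w = r4 m B (\<lambda>x y z w. F x y * G z w) x y z w"
  unfolding r4_def by (subst r2_mult_R) (simp only: r2_mult_L)

lemma r4_sum: "(\<Sum>i\<in>I. r4 m B (F i) x y z w) = r4 m B (\<lambda>x y z w. \<Sum>i\<in>I. F i x y z w) x y z w"
  unfolding r4_def by (simp only: rot_sum)

lemma r4_add: "r4 m B F x y z w + r4 m B G x y z w = r4 m B (\<lambda>x y z w. F x y z w + G x y z w) x y z w"
  unfolding r4_def by (simp only: rot_add)

lemma r4_diff: "r4 m B F x y z w - r4 m B G x y z w = r4 m B (\<lambda>x y z w. F x y z w - G x y z w) x y z w"
  unfolding r4_def by (simp only: rot_diff)

lemma r4_swap12: "r4 m B H y x z w = r4 m B (\<lambda>x y z w. H y x z w) x y z w"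
  unfolding r4_def using rot_swap[of m B "\<lambda>a' b'. rot m B (\<lambda>c'. rot m B (\<lambda>d'. H a' b' c' d') w) z" x y] by simp

lemma r4_perm: "r4 m B H x w y z = r4 m B (\<lambda>x y z w. H x w y z) x y z w"
proof -
  have 1: "rot m B (\<lambda>w'. rot m B (\<lambda>y'. rot m B (\<lambda>z'. H x' w' y' z') z) y) w
      = rot m B (\<lambda>y'. rot m B (\<lambda>w'. rot m B (\<lambda>z'. H x' w' y' z') z) w) y" for x'
    using rot_swap[of m B "\<lambda>w' y'. rot m B (\<lambda>z'. H x' w' y' z') z" y w] by simp
  have 2: "rot m B (\<lambda>w'. rot m B (\<lambda>z'. H x' w' y' z') z) w
      = rot m B (\<lambda>z'. rot m B (\<lambda>w'. H x' w' y' z') w) z" for x' y'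
    using rot_swap[of m B "\<lambda>w' z'. H x' w' y' z'" z w] by simp
  show ?thesis unfolding r4_def by (simp only: 1 2)
qed

lemma T1: assumes "orth m B"
  shows "(\<Sum>c<m. r3 m B F x y c * r3 m B G c z w) = r4 m B (\<lambda>x y z w. \<Sum>c<m. F x y c * G c z w) x y z w"
proof -
  have "(\<Sum>c<m. r3 m B F x y c * r3 m B G c z w)
     = (\<Sum>c<m. rot m B (\<lambda>c'. r2 m B (\<lambda>x' y'. F x' y' c') x y) c * rot m B (\<lambda>c'. r2 m B (G c') z w) c)"
    by (simp only: r3_last_out[of m B F] r3_first[of m B G])
  also have "\<dots> = (\<Sum>c<m. r2 m B (\<lambda>x' y'. F x' y' c) x y * r2 m B (G c) z w)"
    by (rule rot_inner[OF assms])
  also have "\<dots> = (\<Sum>c<m. r4 m B (\<lambda>x y z w. F x y c * G c z w) x y z w)"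
    by (simp only: r2_mult)
  also have "\<dots> = r4 m B (\<lambda>x y z w. \<Sum>c<m. F x y c * G c z w) x y z w"
    by (rule r4_sum)
  finally show ?thesis .
qed

lemma T3: assumes "orth m B"
  shows "(\<Sum>v<m. r3 m B F x v w * r3 m B G y z v) = r4 m B (\<lambda>x y z w. \<Sum>v<m. F x v w * G y z v) x y z w"
proof -
  have "(\<Sum>v<m. r3 m B F x v w * r3 m B G y z v)
     = (\<Sum>v<m. rot m B (\<lambda>v'. r2 m B (\<lambda>x' w'. F x' v' w') x w) v * rot m B (\<lambda>v'. r2 m B (\<lambda>y' z'. G y' z' v') y z) v)"
    by (simp only: r3_last_out[of m B G] r3_mid_out[of m B F])
  also have "\<dots> = (\<Sum>v<m. r2 m B (\<lambda>x' w'. F x' v w') x w * r2 m B (\<lambda>y' z'. G y' z' v) y z)"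
    by (rule rot_inner[OF assms])
  also have "\<dots> = (\<Sum>v<m. r4 m B (\<lambda>x w y z. F x v w * G y z v) x w y z)"
    by (simp only: r2_mult)
  also have "\<dots> = (\<Sum>v<m. r4 m B (\<lambda>x y z w. F x v w * G y z v) x y z w)"
    by (intro sum.cong refl) (rule r4_perm)
  also have "\<dots> = r4 m B (\<lambda>x y z w. \<Sum>v<m. F x v w * G y z v) x y z w"
    by (rule r4_sum)
  finally show ?thesis .
qed

lemma T2: "(\<Sum>i\<in>I. r2 m B (F i) x y * r2 m B (G i) z w) = r4 m B (\<lambda>x y z w. \<Sum>i\<in>I. F i x y * G i z w) x y z w"
  by (simp only: r2_mult) (rule r4_sum)


lemma sum_split: "(\<Sum>a<q+m. f a) = (\<Sum>a<q. f a) + (\<Sum>a<m. f (q+a))" for q m :: nat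
  by (induction m) (auto simp: add.assoc)

abbreviation gel :: "nat \<Rightarrow> nat \<Rightarrow> rmat \<Rightarrow> rmat \<Rightarrow> rmat \<Rightarrow> rmat \<times> rmat" where
  "gel q m A Ai B \<equiv> (block q m A B, block q m Ai (transp B))"

lemma E1:
  assumes "a < m" "b < m" "c < m"
  shows "act q m (gel q m A Ai B) \<mu> (q+a) (q+b) (q+c) = r3 m B (\<lambda>a' b' c'. \<mu> (q+a') (q+b') (q+c')) a b c"
  using assms
  by (simp add: act_def sum_split block_def transp_def r3_def rot_def sum_distrib_left mult_ac cong: sum.cong_simp)

lemma E2:
  assumes "a < m" "b < m" "i < q"
  shows "act q m (gel q m A Ai B) \<mu> (q+a) (q+b) i = r2 m B (\<lambda>a' b'. \<Sum>i'<q. A i i' * \<mu> (q+a') (q+b') i') a b"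
  using assms
  by (simp add: act_def sum_split block_def transp_def r2_def rot_def sum_distrib_left mult_ac cong: sum.cong_simp)

lemma E3:
  assumes "b < m" "c < m" "i < q"
  shows "act q m (gel q m A Ai B) \<mu> i (q+b) (q+c) = (\<Sum>i'<q. Ai i' i * r2 m B (\<lambda>b' c'. \<mu> i' (q+b') (q+c')) b c)"
  using assms
  by (simp add: act_def sum_split block_def transp_def r2_def rot_def sum_distrib_left mult_ac cong: sum.cong_simp)


lemma r2_lin: "(\<Sum>i\<in>I. k i * r2 m B (F i) a b) = r2 m B (\<lambda>a' b'. \<Sum>i\<in>I. k i * F i a' b') a b"
  unfolding r2_def by (simp only: rot_mult_left rot_sum)


lemma r3_perm_cab: "r3 m B F c a b = r3 m B (\<lambda>a b c. F c a b) a b c"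
proof -
  have 1: "rot m B (\<lambda>c'. rot m B (\<lambda>a'. rot m B (\<lambda>b'. F c' a' b') b) a) c
      = rot m B (\<lambda>a'. rot m B (\<lambda>c'. rot m B (\<lambda>b'. F c' a' b') b) c) a"
    using rot_swap[of m B "\<lambda>c' a'. rot m B (\<lambda>b'. F c' a' b') b" a c] by simp
  have 2: "rot m B (\<lambda>c'. rot m B (\<lambda>b'. F c' a' b') b) c = rot m B (\<lambda>b'. rot m B (\<lambda>c'. F c' a' b') c) b" for a'
    using rot_swap[of m B "\<lambda>c' b'. F c' a' b'" b c] by simp
  show ?thesis unfolding r3_def by (simp only: 1 2)
qed

lemma r3_perm_cba: "r3 m B F c b a = r3 m B (\<lambda>a b c. F c b a) a b c"
proof -
  have "r3 m B F c b a = r3 m B (\<lambda>b a c. F c b a) b a c" by (rule r3_perm_cab)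
  also have "\<dots> = r3 m B (\<lambda>a b c. F c b a) a b c"
    unfolding r3_def using rot_swap[of m B "\<lambda>b' a'. rot m B (\<lambda>c'. F c' b' a') c" a b] by simp
  finally show ?thesis .
qed

lemma r3_lin: "r3 m B F a b c / 2 + (r3 m B G a b c + r3 m B H a b c) / 2
   = r3 m B (\<lambda>a b c. F a b c / 2 + (G a b c + H a b c) / 2) a b c"
  unfolding r3_def by (simp only: rot_add rot_div)

context
  fixes q m :: nat and A Ai B :: rmat and \<mu> :: brk
  assumes B: "orth m B" and A: "is_inverse_pair q A Ai"
begin

abbreviation "nuact \<equiv> act q m (gel q m A Ai B) \<mu>"

lemma lam_eq:
  assumes "a < m" "b < m" "c < m"
  shows "lam q m nuact a b c = r3 m B (lam q m \<mu>) a b c"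
proof -
  let ?M = "\<lambda>a' b' c'. \<mu> (q+a') (q+b') (q+c')"
  have "lam q m nuact a b c = r3 m B ?M a b c / 2 + (r3 m B ?M c a b + r3 m B ?M c b a) / 2"
    unfolding lam_def using assms by (simp add: E1)
  also have "\<dots> = r3 m B ?M a b c / 2 + (r3 m B (\<lambda>a b c. ?M c a b) a b c + r3 m B (\<lambda>a b c. ?M c b a) a b c) / 2"
    by (simp only: r3_perm_cab[of m B ?M c a b] r3_perm_cba[of m B ?M c b a])
  also have "\<dots> = r3 m B (lam q m \<mu>) a b c"
    unfolding r3_lin lam_def ..
  finally show ?thesis .
qed

lemma inv_contract:
  "(\<Sum>i<q. (\<Sum>i''<q. A i i'' * X i'') * (\<Sum>i'<q. Ai i' i * Y i')) = (\<Sum>i'<q. X i' * Y i')"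
proof -
  have "(\<Sum>i<q. (\<Sum>i''<q. A i i'' * X i'') * (\<Sum>i'<q. Ai i' i * Y i'))
      = (\<Sum>i<q. \<Sum>i''<q. \<Sum>i'<q. A i i'' * Ai i' i * X i'' * Y i')"
    by (simp add: sum_product mult_ac)
  also have "\<dots> = (\<Sum>i''<q. \<Sum>i<q. \<Sum>i'<q. A i i'' * Ai i' i * X i'' * Y i')" by (rule sum.swap)
  also have "\<dots> = (\<Sum>i''<q. \<Sum>i'<q. \<Sum>i<q. A i i'' * Ai i' i * X i'' * Y i')"
    by (rule sum.cong[OF refl], rule sum.swap)
  also have "\<dots> = (\<Sum>i''<q. \<Sum>i'<q. (\<Sum>i<q. Ai i' i * A i i'') * X i'' * Y i')"
    by (simp add: sum_distrib_left sum_distrib_right mult_ac)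
  also have "\<dots> = (\<Sum>i''<q. \<Sum>i'<q. (if i' = i'' then X i'' * Y i' else 0))"
    using A unfolding is_inverse_pair_def by (intro sum.cong refl) auto
  also have "\<dots> = (\<Sum>i'<q. X i' * Y i')" by simp
  finally show ?thesis .
qed

lemma rm0_eq:
  assumes "x < m" "y < m" "z < m" "w < m"
  shows "rm0 q m nuact x y z w = r4 m B (rm0 q m \<mu>) x y z w"
proof -
  let ?M = "\<lambda>a' b' c'. \<mu> (q+a') (q+b') (q+c')"
  let ?L = "lam q m \<mu>"
  have t1: "(\<Sum>c<m. nuact (q + x) (q + y) (q + c) * lam q m nuact c z w)
      = r4 m B (\<lambda>x y z w. \<Sum>c<m. ?M x y c * ?L c z w) x y z w"
  proof -
    have "(\<Sum>c<m. nuact (q + x) (q + y) (q + c) * lam q m nuact c z w) = (\<Sum>c<m. r3 m B ?M x y c * r3 m B ?L c z w)"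
      using assms by (intro sum.cong refl) (simp add: E1 lam_eq)
    also have "\<dots> = r4 m B (\<lambda>x y z w. \<Sum>c<m. ?M x y c * ?L c z w) x y z w" by (rule T1[OF B])
    finally show ?thesis .
  qed
  have t2: "(\<Sum>i<q. nuact (q + x) (q + y) i * nuact i (q + z) (q + w))
      = r4 m B (\<lambda>x y z w. \<Sum>i<q. \<mu> (q + x) (q + y) i * \<mu> i (q + z) (q + w)) x y z w"
  proof -
    have "(\<Sum>i<q. nuact (q + x) (q + y) i * nuact i (q + z) (q + w))
       = (\<Sum>i<q. r2 m B (\<lambda>a' b'. \<Sum>i'<q. A i i' * \<mu> (q+a') (q+b') i') x y
           * r2 m B (\<lambda>b' c'. \<Sum>i'<q. Ai i' i * \<mu> i' (q+b') (q+c')) z w)"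
      using assms by (intro sum.cong refl) (simp add: E2 E3 r2_lin)
    also have "\<dots> = r4 m B (\<lambda>x y z w. \<Sum>i<q. (\<Sum>i'<q. A i i' * \<mu> (q+x) (q+y) i') * (\<Sum>i'<q. Ai i' i * \<mu> i' (q+z) (q+w))) x y z w"
      by (rule T2)
    also have "\<dots> = r4 m B (\<lambda>x y z w. \<Sum>i<q. \<mu> (q + x) (q + y) i * \<mu> i (q + z) (q + w)) x y z w"
      by (simp only: inv_contract)
    finally show ?thesis .
  qed
  have t3: "(\<Sum>v<m. lam q m nuact x v w * lam q m nuact y z v - lam q m nuact y v w * lam q m nuact x z v)
      = r4 m B (\<lambda>x y z w. \<Sum>v<m. ?L x v w * ?L y z v - ?L y v w * ?L x z v) x y z w"
  proof -
    have "(\<Sum>v<m. lam q m nuact x v w * lam q m nuact y z v - lam q m nuact y v w * lam q m nuact x z v)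
       = (\<Sum>v<m. r3 m B ?L x v w * r3 m B ?L y z v) - (\<Sum>v<m. r3 m B ?L y v w * r3 m B ?L x z v)"
      using assms by (simp add: lam_eq sum_subtractf)
    also have "\<dots> = r4 m B (\<lambda>x y z w. \<Sum>v<m. ?L x v w * ?L y z v) x y z w
                  - r4 m B (\<lambda>y x z w. \<Sum>v<m. ?L y v w * ?L x z v) y x z w"
      by (simp only: T3[OF B])
    also have "\<dots> = r4 m B (\<lambda>x y z w. \<Sum>v<m. ?L x v w * ?L y z v) x y z w
                  - r4 m B (\<lambda>x y z w. \<Sum>v<m. ?L y v w * ?L x z v) x y z w"
      by (subst r4_swap12) (rule refl)
    also have "\<dots> = r4 m B (\<lambda>x y z w. \<Sum>v<m. ?L x v w * ?L y z v - ?L y v w * ?L x z v) x y z w"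
      by (simp only: r4_diff sum_subtractf)
    finally show ?thesis .
  qed
  show ?thesis
    unfolding rm0_def[of q m nuact] t1 t2 t3
    by (simp only: r4_add r4_diff) (simp add: rm0_def[abs_def])
qed

end


lemma act_t_4: "act_t m B T [x, y, z, w] = r4 m B (\<lambda>a b c d. T [a, b, c, d]) x y z w"
  by (simp add: act_t_Cons r4_def rot_def)

lemma Rmk0_alt: "Rmk q m 0 \<mu> l = (if length l = 4 then rm0 q m \<mu> (l!0) (l!1) (l!2) (l!3) else 0)"
  by (auto split: list.split simp: numeral_eq_Suc)

lemma Rmk_equiv:
  assumes B: "orth m B" and A: "is_inverse_pair q A Ai" and l: "set l \<subseteq> {..<m}"
  shows "Rmk q m k (act q m (gel q m A Ai B) \<mu>) l = act_t m B (Rmk q m k \<mu>) l"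
  using l
proof (induction k arbitrary: l)
  case 0
  show ?case
  proof (cases "length l = 4")
    case True
    then obtain x y z w where lx: "l = [x, y, z, w]"
      by (cases l; cases "tl l"; cases "tl (tl l)"; cases "tl (tl (tl l))"; cases "tl (tl (tl (tl l)))"; simp)
    have xs: "x < m" "y < m" "z < m" "w < m" using "0.prems" lx by auto
    show ?thesis using xs
      by (simp add: lx act_t_4 rm0_eq[OF B A])
  next
    case False
    have "act_t m B (Rmk q m 0 \<mu>) l = act_t m B (\<lambda>ys. 0) l"
      by (rule act_t_cong) (simp only: Rmk0_alt, simp add: False)
    then have "act_t m B (Rmk q m 0 \<mu>) l = 0" by (simp only: act_t_zero)
    moreover have "Rmk q m 0 (act q m (gel q m A Ai B) \<mu>) l = 0" by (simp only: Rmk0_alt, simp add: False)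
    ultimately show ?thesis by simp
  qed
next
  case (Suc k)
  have L': "lam q m (act q m (gel q m A Ai B) \<mu>) x b c = (\<Sum>x'<m. B x x' * cnj m B (lam q m \<mu> x') b c)"
    if "x < m" "b < m" "c < m" for x b c
    using that by (simp add: lam_eq[OF B A] r3_def rot_def cnj_def sum_distrib_left mult_ac)
  show ?case
    unfolding Rmk_Suc_Dop
    by (rule Dop_equiv[OF B L' _ Suc.prems]) (auto intro: Suc.IH)
qed

lemma is_inverse_pair_id: "is_inverse_pair q idm idm"
proof -
  have "(\<Sum>k<q. idm i k * idm k j) = (\<Sum>k<q. if k = i then idm k j else 0)" for i j
    by (intro sum.cong) (auto simp: idm_def)
  then show ?thesis unfolding is_inverse_pair_def by (auto simp: idm_def)
qed

lemma Rmk_GL_inv: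
  assumes A: "is_inverse_pair q A Ai" and l: "set l \<subseteq> {..<m}"
  shows "Rmk q m k (act q m (gel q m A Ai idm) \<mu>) l = Rmk q m k \<mu> l"
  using Rmk_equiv[OF orth_id A l] act_t_id[OF l] by simp


lemma lam_tendsto:
  assumes "\<And>i j c. (\<lambda>n. nus n i j c) \<longlonglongrightarrow> nu i j c"
  shows "(\<lambda>n. lam q m (nus n) a b c) \<longlonglongrightarrow> lam q m nu a b c"
  unfolding lam_def by (intro tendsto_intros assms) simp_all

lemma Rmk_tendsto:
  assumes "\<And>i j c. (\<lambda>n. nus n i j c) \<longlonglongrightarrow> nu i j c"
  shows "(\<lambda>n. Rmk q m k (nus n) l) \<longlonglongrightarrow> Rmk q m k nu l"
proof (induction k arbitrary: l)
  case 0
  show ?case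
  proof (cases "length l = 4")
    case True
    then show ?thesis unfolding Rmk0_alt rm0_def
      unfolding if_P[OF True] by (intro tendsto_intros assms lam_tendsto[OF assms])
  next
    case False
    then show ?thesis unfolding Rmk0_alt by simp
  qed
next
  case (Suc k)
  show ?case unfolding Rmk_Suc_Dop Dop_def
    by (cases l) (auto intro!: tendsto_intros lam_tendsto[OF assms] Suc.IH)
qed

lemma Rmk_restr:
  assumes qq: "q' \<le> q" and d: "d = q - q'"
    and kill: "\<And>i b c. i < d \<Longrightarrow> b < m \<Longrightarrow> c < m \<Longrightarrow> \<rho> i (q+b) (q+c) = 0"
    and \<rho>': "\<rho>' = (\<lambda>i j k. if i < q' + m \<and> j < q' + m \<and> k < q' + m then \<rho> (i + d) (j + d) (k + d) else 0)"
    and l: "set l \<subseteq> {..<m}"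
  shows "Rmk q m k \<rho> l = Rmk q' m k \<rho>' l"
proof -
  have qd: "q = d + q'" using qq d by simp
  have r1: "\<rho>' (q'+a) (q'+b) (q'+c) = \<rho> (q+a) (q+b) (q+c)" if "a < m" "b < m" "c < m" for a b c
    using that by (simp add: \<rho>' qd add_ac)
  have r2: "\<rho>' (q'+a) (q'+b) i = \<rho> (q+a) (q+b) (d+i)" if "a < m" "b < m" "i < q'" for a b i
    using that by (simp add: \<rho>' qd add_ac)
  have r3: "\<rho>' i (q'+b) (q'+c) = \<rho> (d+i) (q+b) (q+c)" if "i < q'" "b < m" "c < m" for i b c
    using that by (simp add: \<rho>' qd add_ac)
  have lam: "lam q m \<rho> a b c = lam q' m \<rho>' a b c" if "a < m" "b < m" "c < m" for a b c
    using that by (simp add: lam_def r1)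
  have rm: "rm0 q m \<rho> x y z w = rm0 q' m \<rho>' x y z w" if "x < m" "y < m" "z < m" "w < m" for x y z w
  proof -
    have t1: "(\<Sum>c<m. \<rho> (q + x) (q + y) (q + c) * lam q m \<rho> c z w) = (\<Sum>c<m. \<rho>' (q' + x) (q' + y) (q' + c) * lam q' m \<rho>' c z w)"
      using that by (intro sum.cong refl) (simp add: lam r1)
    have t2: "(\<Sum>i<q. \<rho> (q + x) (q + y) i * \<rho> i (q + z) (q + w)) = (\<Sum>i<q'. \<rho>' (q' + x) (q' + y) i * \<rho>' i (q' + z) (q' + w))"
    proof -
      have "(\<Sum>i<q. \<rho> (q + x) (q + y) i * \<rho> i (q + z) (q + w))
          = (\<Sum>i<d. \<rho> (q + x) (q + y) i * \<rho> i (q + z) (q + w)) + (\<Sum>i<q'. \<rho> (q + x) (q + y) (d + i) * \<rho> (d + i) (q + z) (q + w))"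
        using sum_split[where q=d and m=q' and f="\<lambda>i. \<rho> (q + x) (q + y) i * \<rho> i (q + z) (q + w)"] qd by simp
      also have "\<dots> = (\<Sum>i<q'. \<rho>' (q' + x) (q' + y) i * \<rho>' i (q' + z) (q' + w))"
        using that kill by (simp add: r2 r3)
      finally show ?thesis .
    qed
    have t3: "(\<Sum>v<m. lam q m \<rho> x v w * lam q m \<rho> y z v - lam q m \<rho> y v w * lam q m \<rho> x z v)
        = (\<Sum>v<m. lam q' m \<rho>' x v w * lam q' m \<rho>' y z v - lam q' m \<rho>' y v w * lam q' m \<rho>' x z v)"
      using that by (intro sum.cong refl) (simp add: lam)
    show ?thesis unfolding rm0_def t1 t2 t3 ..
  qed
  show ?thesis using l
  proof (induction k arbitrary: l)
    case 0
    show ?case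
    proof (cases "length l = 4")
      case True
      have "\<forall>i<length l. l ! i < m" using "0.prems" nth_mem by blast
      then show ?thesis using True by (simp only: Rmk0_alt) (auto intro!: rm)
    next
      case False
      then show ?thesis by (simp only: Rmk0_alt) simp
    qed
  next
    case (Suc k)
    show ?case
    proof (cases l)
      case Nil then show ?thesis by (simp add: Rmk_Suc_Dop Dop_def)
    next
      case (Cons x r)
      have xr: "x < m" "set r \<subseteq> {..<m}" using Suc.prems Cons by auto
      have setupd: "set (r[p := j]) \<subseteq> {..<m}" if "j < m" for p j
        using xr(2) that set_update_subset_insert[of r p j] by auto
      have rp: "r ! p < m" if "p < length r" for p using xr(2) that nth_mem by blast
      show ?thesis unfolding Rmk_Suc_Dop Dop_def Cons
        using xr rp setupd by (auto intro!: sum.cong simp: lam Suc.IH)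
    qed
  qed
qed


lemma sum3: "(\<Sum>a\<in>A. \<Sum>b\<in>B. \<Sum>c\<in>C. F a b c) = (\<Sum>t\<in>A\<times>B\<times>C. F (fst t) (fst (snd t)) (snd (snd t)))"
  by (simp add: sum.cartesian_product case_prod_beta)

lemma act_alt: "act q m g \<mu> i j k = (\<Sum>t\<in>{..<q+m}\<times>{..<q+m}\<times>{..<q+m}.
   fst g k (snd (snd t)) * \<mu> (fst t) (fst (snd t)) (snd (snd t)) * snd g (fst t) i * snd g (fst (snd t)) j)"
  unfolding act_def by (rule sum3)

lemma prod3: "(\<Sum>c\<in>C. X c) * Y * (\<Sum>a\<in>A. P a) * (\<Sum>b\<in>B. Q b) = (\<Sum>a\<in>A. \<Sum>b\<in>B. \<Sum>c\<in>C. X c * Y * P a * Q b)"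
  for X P Q :: "nat \<Rightarrow> real" and Y :: real
proof -
  have "(\<Sum>c\<in>C. X c) * Y * (\<Sum>a\<in>A. P a) * (\<Sum>b\<in>B. Q b) = (\<Sum>a\<in>A. P a) * ((\<Sum>b\<in>B. Q b) * ((\<Sum>c\<in>C. X c) * Y))"
    by (simp add: mult_ac)
  also have "\<dots> = (\<Sum>a\<in>A. P a * ((\<Sum>b\<in>B. Q b) * ((\<Sum>c\<in>C. X c) * Y)))"
    by (rule sum_distrib_right)
  also have "\<dots> = (\<Sum>a\<in>A. \<Sum>b\<in>B. \<Sum>c\<in>C. P a * (Q b * (X c * Y)))"
    by (simp add: sum_distrib_left sum_distrib_right) (rule sum.cong[OF refl], rule sum.swap)
  finally show ?thesis by (simp add: mult_ac)
qed

lemma act_comp: "act q m (G1, H1) (act q m (G2, H2) \<mu>) = act q m (mm (q+m) G1 G2, mm (q+m) H2 H1) \<mu>"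
proof (intro ext)
  fix i j k
  let ?S = "{..<q+m}\<times>{..<q+m}\<times>{..<q+m}"
  have "act q m (G1, H1) (act q m (G2, H2) \<mu>) i j k
     = (\<Sum>t\<in>?S. \<Sum>t'\<in>?S. G1 k (snd (snd t)) * G2 (snd (snd t)) (snd (snd t')) * \<mu> (fst t') (fst (snd t')) (snd (snd t'))
          * H2 (fst t') (fst t) * H2 (fst (snd t')) (fst (snd t)) * H1 (fst t) i * H1 (fst (snd t)) j)"
    unfolding act_alt[of q m "(G1, H1)"] act_alt[of q m "(G2, H2)"]
    by (simp add: sum_distrib_left sum_distrib_right mult_ac)
  also have "\<dots> = (\<Sum>t'\<in>?S. \<Sum>t\<in>?S. G1 k (snd (snd t)) * G2 (snd (snd t)) (snd (snd t')) * \<mu> (fst t') (fst (snd t')) (snd (snd t'))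
          * H2 (fst t') (fst t) * H2 (fst (snd t')) (fst (snd t)) * H1 (fst t) i * H1 (fst (snd t)) j)"
    by (rule sum.swap)
  also have "\<dots> = act q m (mm (q+m) G1 G2, mm (q+m) H2 H1) \<mu> i j k"
    unfolding act_alt[of q m "(mm (q+m) G1 G2, mm (q+m) H2 H1)"]
  proof (intro sum.cong refl)
    fix t' assume "t' \<in> ?S"
    show "(\<Sum>t\<in>?S. G1 k (snd (snd t)) * G2 (snd (snd t)) (snd (snd t')) * \<mu> (fst t') (fst (snd t')) (snd (snd t'))
          * H2 (fst t') (fst t) * H2 (fst (snd t')) (fst (snd t)) * H1 (fst t) i * H1 (fst (snd t)) j)
        = fst (mm (q+m) G1 G2, mm (q+m) H2 H1) k (snd (snd t')) * \<mu> (fst t') (fst (snd t')) (snd (snd t')) *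
          snd (mm (q+m) G1 G2, mm (q+m) H2 H1) (fst t') i * snd (mm (q+m) G1 G2, mm (q+m) H2 H1) (fst (snd t')) j"
      unfolding mm_def fst_conv snd_conv prod3 sum3
      by (intro sum.cong refl) (simp add: mult_ac)
  qed
  finally show "act q m (G1, H1) (act q m (G2, H2) \<mu>) i j k = act q m (mm (q+m) G1 G2, mm (q+m) H2 H1) \<mu> i j k" .
qed


lemma orth_rows:
  fixes B :: "nat \<Rightarrow> nat \<Rightarrow> real"
  assumes "orth m B" "i < m" "j < m"
  shows "(\<Sum>k<m. B i k * B j k) = (if i = j then 1 else 0)"
proof -
  let ?M = "Matrix.mat m m (\<lambda>(i,j). B i j)"
  have c: "?M \<in> carrier_mat m m" "transpose_mat ?M \<in> carrier_mat m m" by auto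
  have "transpose_mat ?M * ?M = 1\<^sub>m m"
    using assms(1) unfolding orth_def
    by (intro eq_matI) (auto simp: scalar_prod_def atLeast0LessThan)
  then have "?M * transpose_mat ?M = 1\<^sub>m m"
    using mat_mult_left_right_inverse[OF c(2) c(1)] by blast
  then have "(?M * transpose_mat ?M) $$ (i,j) = 1\<^sub>m m $$ (i,j)" by simp
  then show ?thesis using assms(2,3)
    by (auto simp: scalar_prod_def atLeast0LessThan)
qed

lemma orth_transp: assumes "orth m B" shows "orth m (transp B)"
  unfolding orth_def transp_def using orth_rows[OF assms] by blast

lemma blk1: "i < q \<Longrightarrow> s < q \<Longrightarrow> block q m A B i s = A i s" by (simp add: block_def)
lemma blk2: "i < q \<Longrightarrow> block q m A B i (q+s) = 0" by (simp add: block_def)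
lemma blk3: "s < q \<Longrightarrow> q \<le> j \<Longrightarrow> block q m A B s j = 0" by (simp add: block_def)
lemma blk4: "q \<le> i \<Longrightarrow> s < q \<Longrightarrow> block q m A B i s = 0" by (simp add: block_def)
lemma blk5: "j < q \<Longrightarrow> block q m A B (q+s) j = 0" by (simp add: block_def)
lemma blk6: "q \<le> i \<Longrightarrow> i < q + m \<Longrightarrow> s < m \<Longrightarrow> block q m A B i (q+s) = B (i-q) s" by (simp add: block_def)
lemma blk7: "s < m \<Longrightarrow> q \<le> j \<Longrightarrow> j < q + m \<Longrightarrow> block q m A B (q+s) j = B s (j-q)" by (simp add: block_def)
lemma blk8: "q + m \<le> i \<Longrightarrow> block q m A B i s = 0" by (simp add: block_def)
lemma blk9: "q + m \<le> j \<Longrightarrow> block q m A B s j = 0" by (simp add: block_def)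

lemma block_mm: "mm (q+m) (block q m A B) (block q m C E) = block q m (mm q A C) (mm m B E)"
proof (intro ext)
  fix i j
  have e: "mm (q+m) (block q m A B) (block q m C E) i j =
     (\<Sum>s<q. block q m A B i s * block q m C E s j) + (\<Sum>s<m. block q m A B i (q+s) * block q m C E (q+s) j)"
    unfolding mm_def by (rule sum_split)
  show "mm (q+m) (block q m A B) (block q m C E) i j = block q m (mm q A C) (mm m B E) i j"
  proof (cases "q + m \<le> i \<or> q + m \<le> j")
    case True
    then show ?thesis unfolding e by (auto simp: blk8 blk9)
  next
    case False
    then have ij: "i < q + m" "j < q + m" by auto
    show ?thesis
    proof (cases "i < q")
      case i: True
      show ?thesis
      proof (cases "j < q")
        case True
        then show ?thesis unfolding e using i by (simp add: blk1 blk2 mm_def)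
      next
        case False
        then show ?thesis unfolding e using i by (simp add: blk2 blk3 block_def)
      qed
    next
      case i: False
      show ?thesis
      proof (cases "j < q")
        case True
        then show ?thesis unfolding e using i by (simp add: blk4 blk5 block_def)
      next
        case False
        then show ?thesis unfolding e using i ij by (simp add: blk4 blk6 blk7 block_def mm_def)
      qed
    qed
  qed
qed

lemma block_cong: "(\<And>i j. i < q \<Longrightarrow> j < q \<Longrightarrow> A i j = A' i j) \<Longrightarrow> (\<And>i j. i < m \<Longrightarrow> j < m \<Longrightarrow> B i j = B' i j)
   \<Longrightarrow> block q m A B = block q m A' B'"
  by (intro ext) (auto simp: block_def)

lemma mm_assoc: "mm n (mm n A B) C = mm n A (mm n B C)"
proof (intro ext)
  fix i j
  have "mm n (mm n A B) C i j = (\<Sum>k<n. \<Sum>s<n. A i s * B s k * C k j)"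
    by (simp add: mm_def sum_distrib_right)
  also have "\<dots> = (\<Sum>s<n. \<Sum>k<n. A i s * B s k * C k j)" by (rule sum.swap)
  also have "\<dots> = mm n A (mm n B C) i j" by (simp add: mm_def sum_distrib_left mult.assoc)
  finally show "mm n (mm n A B) C i j = mm n A (mm n B C) i j" .
qed

lemma mm_id_right: "j < n \<Longrightarrow> mm n A idm i j = A i j"
proof -
  assume j: "j < n"
  have "mm n A idm i j = (\<Sum>k<n. if k = j then A i k else 0)" unfolding mm_def by (intro sum.cong) (auto simp: idm_def)
  then show ?thesis using j by simp
qed

lemma inv_pair_mm1: "is_inverse_pair q A Ai \<Longrightarrow> i < q \<Longrightarrow> j < q \<Longrightarrow> mm q A Ai i j = idm i j"
  unfolding is_inverse_pair_def mm_def idm_def by auto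
lemma inv_pair_mm2: "is_inverse_pair q A Ai \<Longrightarrow> i < q \<Longrightarrow> j < q \<Longrightarrow> mm q Ai A i j = idm i j"
  unfolding is_inverse_pair_def mm_def idm_def by auto
lemma orth_mm_idm: "orth m E \<Longrightarrow> i < m \<Longrightarrow> j < m \<Longrightarrow> mm m (transp E) E i j = idm i j"
  unfolding orth_def mm_def idm_def transp_def by auto

lemma mm_transp: "transp (mm m B (transp E)) = mm m E (transp B)"
  by (intro ext) (simp add: transp_def mm_def mult.commute)

lemma grp_elem: "g \<in> grp q m \<Longrightarrow> \<exists>A Ai B. g = gel q m A Ai B \<and> is_inverse_pair q A Ai \<and> orth m B"
  unfolding grp_def by blast

lemma gel_grp: "is_inverse_pair q A Ai \<Longrightarrow> orth m B \<Longrightarrow> gel q m A Ai B \<in> grp q m"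
  unfolding grp_def by blast

lemma inv_pair_comp:
  assumes "is_inverse_pair q A Ai" "is_inverse_pair q C Ci"
  shows "is_inverse_pair q (mm q A Ci) (mm q C Ai)"
proof -
  have 1: "mm q (mm q A Ci) (mm q C Ai) i j = idm i j" if "i < q" "j < q" for i j
  proof -
    have "mm q (mm q A Ci) (mm q C Ai) = mm q (mm q A (mm q Ci C)) Ai" by (simp add: mm_assoc)
    moreover have "mm q (mm q A (mm q Ci C)) Ai i j = mm q (mm q A idm) Ai i j"
      using that inv_pair_mm2[OF assms(2)] by (simp add: mm_def)
    ultimately show ?thesis using that assms(1) by (simp add: mm_def[of q "mm q A idm"] mm_id_right is_inverse_pair_def idm_def)
  qed
  have 2: "mm q (mm q C Ai) (mm q A Ci) i j = idm i j" if "i < q" "j < q" for i j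
  proof -
    have "mm q (mm q C Ai) (mm q A Ci) = mm q (mm q C (mm q Ai A)) Ci" by (simp add: mm_assoc)
    moreover have "mm q (mm q C (mm q Ai A)) Ci i j = mm q (mm q C idm) Ci i j"
      using that inv_pair_mm1[OF assms(1)] inv_pair_mm2[OF assms(1)] by (simp add: mm_def)
    ultimately show ?thesis using that assms(2) by (simp add: mm_def[of q "mm q C idm"] mm_id_right is_inverse_pair_def idm_def)
  qed
  show ?thesis using 1 2 unfolding is_inverse_pair_def mm_def idm_def by auto
qed


lemma mm_idm_r: "(\<And>k j. k < n \<Longrightarrow> j < n \<Longrightarrow> X k j = idm k j) \<Longrightarrow> j < n \<Longrightarrow> mm n Z X i j = Z i j"
  using mm_id_right[of j n Z i] unfolding mm_def by simp
lemma mm_idm_l: "(\<And>i k. i < n \<Longrightarrow> k < n \<Longrightarrow> X i k = idm i k) \<Longrightarrow> i < n \<Longrightarrow> mm n X Z i j = Z i j"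
proof -
  assume X: "\<And>i k. i < n \<Longrightarrow> k < n \<Longrightarrow> X i k = idm i k" and i: "i < n"
  have "mm n X Z i j = (\<Sum>k<n. if k = i then Z k j else 0)" unfolding mm_def
    using X i by (intro sum.cong) (auto simp: idm_def)
  then show ?thesis using i by simp
qed

lemma grp_quot:
  assumes g: "g \<in> grp q m" and h: "h \<in> grp q m"
  shows "\<exists>g'\<in>grp q m. \<forall>\<mu>. act q m g' (act q m h \<mu>) = act q m g \<mu>"
proof -
  obtain A Ai B where gA: "g = gel q m A Ai B" "is_inverse_pair q A Ai" "orth m B" using grp_elem[OF g] by blast
  obtain C Ci E where hC: "h = gel q m C Ci E" "is_inverse_pair q C Ci" "orth m E" using grp_elem[OF h] by blast
  let ?g' = "gel q m (mm q A Ci) (mm q C Ai) (mm m B (transp E))"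
  have mem: "?g' \<in> grp q m"
    by (rule gel_grp[OF inv_pair_comp[OF gA(2) hC(2)] orth_mm[OF gA(3) orth_transp[OF hC(3)]]])
  have b1: "block q m (mm q (mm q A Ci) C) (mm m (mm m B (transp E)) E) = block q m A B"
  proof (rule block_cong)
    fix i j assume "i < q" "j < q"
    then show "mm q (mm q A Ci) C i j = A i j"
      unfolding mm_assoc using inv_pair_mm2[OF hC(2)] by (intro mm_idm_r) auto
  next
    fix i j assume "i < m" "j < m"
    then show "mm m (mm m B (transp E)) E i j = B i j"
      unfolding mm_assoc using orth_mm_idm[OF hC(3)] by (intro mm_idm_r) auto
  qed
  have b2: "block q m (mm q Ci (mm q C Ai)) (mm m (transp E) (transp (mm m B (transp E)))) = block q m Ai (transp B)"
  proof (rule block_cong)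
    fix i j assume "i < q" "j < q"
    then show "mm q Ci (mm q C Ai) i j = Ai i j"
      unfolding mm_assoc[symmetric] using inv_pair_mm2[OF hC(2)] by (intro mm_idm_l) auto
  next
    fix i j assume "i < m" "j < m"
    then show "mm m (transp E) (transp (mm m B (transp E))) i j = transp B i j"
      unfolding mm_transp mm_assoc[symmetric] using orth_mm_idm[OF hC(3)] by (intro mm_idm_l) auto
  qed
  have "act q m ?g' (act q m h \<mu>) = act q m g \<mu>" for \<mu>
    unfolding hC(1) gA(1) act_comp block_mm b1 b2 ..
  then show ?thesis using mem by blast
qed

lemma transp_idm: "transp idm = idm"
  by (intro ext) (simp add: transp_def idm_def)

lemma block_idm: "block q m idm idm i j = (if i < q + m \<and> i = j then 1 else 0)"
proof (cases "i < q \<and> j < q")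
  case True then show ?thesis unfolding block_def idm_def by simp
next
  case F: False
  show ?thesis
  proof (cases "q \<le> i \<and> i < q + m \<and> q \<le> j \<and> j < q + m")
    case True
    then have "(i - q = j - q) = (i = j)" by linarith
    then show ?thesis using F True unfolding block_def idm_def by simp
  next
    case False
    then have "\<not> (i < q + m \<and> i = j)" using F by linarith
    then show ?thesis unfolding block_def if_not_P[OF F] if_not_P[OF False] by simp
  qed
qed

lemma id_grp: "gel q m idm idm idm \<in> grp q m"
  using gel_grp[OF is_inverse_pair_id orth_id] .



lemma sum_if_const: "(\<Sum>c\<in>S. if P then f c else 0) = (if P then (\<Sum>c\<in>S. f c) else 0)"
  by (cases P) simp_all

lemma delta3:
  fixes F :: "nat \<Rightarrow> nat \<Rightarrow> nat \<Rightarrow> real"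
  assumes "i < N" "j < N" "k < N"
  shows "(\<Sum>a<N. \<Sum>b<N. \<Sum>c<N. (if k < N \<and> k = c then 1 else 0) * F a b c * (if a < N \<and> a = i then 1 else 0) * (if b < N \<and> b = j then 1 else 0))
     = F i j k"
proof -
  have "(\<Sum>a<N. \<Sum>b<N. \<Sum>c<N. (if k < N \<and> k = c then 1 else 0) * F a b c * (if a < N \<and> a = i then 1 else 0) * (if b < N \<and> b = j then 1 else 0))
     = (\<Sum>a<N. \<Sum>b<N. \<Sum>c<N. if a = i then (if b = j then (if c = k then F a b c else 0) else 0) else 0)"
    using assms by (intro sum.cong refl) auto
  also have "\<dots> = F i j k" using assms by (simp add: sum_if_const)
  finally show ?thesis .
qed

lemma act_id:
  assumes "\<mu> \<in> V_space q m"
  shows "act q m (gel q m idm idm idm) \<mu> = \<mu>"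
proof (intro ext)
  fix i j k
  show "act q m (gel q m idm idm idm) \<mu> i j k = \<mu> i j k"
  proof (cases "i < q + m \<and> j < q + m \<and> k < q + m")
    case True
    then show ?thesis unfolding act_def transp_idm block_idm fst_conv snd_conv using delta3[of i "q+m" j k \<mu>] True by simp
  next
    case False
    have "act q m (gel q m idm idm idm) \<mu> i j k = 0"
    proof -
      have z: "(if k < q + m \<and> k = c then 1 else 0) * \<mu> a b c * (if a < q + m \<and> a = i then 1 else 0) * (if b < q + m \<and> b = j then 1 else 0) = (0::real)" for a b c
        using False by auto
      show ?thesis unfolding act_def transp_idm block_idm fst_conv snd_conv z by simp
    qed
    moreover have "\<mu> i j k = 0" using False assms unfolding V_space_def by blast
    ultimately show ?thesis by simp
  qed
qed

lemma act_V:
  assumes g: "g \<in> grp q m" and mu: "\<mu> \<in> V_space q m"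
  shows "act q m g \<mu> \<in> V_space q m"
proof -
  obtain A Ai B where gA: "g = gel q m A Ai B" using grp_elem[OF g] by blast
  have skew: "\<mu> b a c = - \<mu> a b c" for a b c using mu unfolding V_space_def by blast
  have s: "act q m g \<mu> i j k = - act q m g \<mu> j i k" for i j k
  proof -
    have "act q m g \<mu> j i k = (\<Sum>b<q+m. \<Sum>a<q+m. \<Sum>c<q+m. fst g k c * \<mu> a b c * snd g a j * snd g b i)"
      unfolding act_def by (rule sum.swap)
    also have "\<dots> = (\<Sum>b<q+m. \<Sum>a<q+m. - (\<Sum>c<q+m. fst g k c * \<mu> b a c * snd g b i * snd g a j))"
    proof (intro sum.cong refl)
      fix a b
      show "(\<Sum>c<q+m. fst g k c * \<mu> a b c * snd g a j * snd g b i) = - (\<Sum>c<q+m. fst g k c * \<mu> b a c * snd g b i * snd g a j)"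
        unfolding sum_negf[symmetric] by (intro sum.cong refl) (simp only: skew[of a b], simp add: mult_ac)
    qed
    also have "\<dots> = - act q m g \<mu> i j k" unfolding act_def by (simp add: sum_negf)
    finally show ?thesis by simp
  qed
  have z: "act q m g \<mu> i j k = 0" if "\<not> (i < q + m \<and> j < q + m \<and> k < q + m)" for i j k
  proof -
    have zz: "fst g k c * \<mu> a b c * snd g a i * snd g b j = 0" for a b c
      using that unfolding gA by (auto simp: blk8 blk9)
    show ?thesis unfolding act_def by (simp only: zz sum.neutral_const)
  qed
  show ?thesis unfolding V_space_def using s z by blast
qed

lemma cont_eval: "continuous_on UNIV (\<lambda>\<mu>::brk. \<mu> a b c)"
proof -
  have 1: "continuous_on UNIV (\<lambda>\<mu>::brk. \<mu> a)" by simp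
  have 2: "continuous_on UNIV (\<lambda>f::nat \<Rightarrow> nat \<Rightarrow> real. f b)" by simp
  have 3: "continuous_on UNIV (\<lambda>f::nat \<Rightarrow> real. f c)" by simp
  have "continuous_on UNIV ((\<lambda>f::nat \<Rightarrow> real. f c) \<circ> (\<lambda>f::nat \<Rightarrow> nat \<Rightarrow> real. f b) \<circ> (\<lambda>\<mu>::brk. \<mu> a))"
    by (intro continuous_on_compose continuous_on_subset[OF 2] continuous_on_subset[OF 3] 1) auto
  then show ?thesis by (simp add: comp_def)
qed

lemma cont_act: "continuous_on UNIV (\<lambda>\<mu>::brk. act q m g \<mu> i j k)"
  unfolding act_def by (intro continuous_intros cont_eval)


definition Dm :: "nat \<Rightarrow> brk \<Rightarrow> brk \<Rightarrow> real" where
  "Dm N mt nu = (\<Sum>i<N. \<Sum>j<N. \<Sum>c<N. \<bar>nu i j c - mt i j c\<bar>)"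

lemma Dm_nonneg: "0 \<le> Dm N mt nu"
  unfolding Dm_def by (intro sum_nonneg) auto

lemma Dm_self: "Dm N mt mt = 0"
  unfolding Dm_def by simp

lemma Dm_coord:
  assumes "i < N" "j < N" "c < N"
  shows "\<bar>nu i j c - mt i j c\<bar> \<le> Dm N mt nu"
proof -
  have "\<bar>nu i j c - mt i j c\<bar> \<le> (\<Sum>c<N. \<bar>nu i j c - mt i j c\<bar>)"
    using assms by (intro member_le_sum) auto
  also have "\<dots> \<le> (\<Sum>j<N. \<Sum>c<N. \<bar>nu i j c - mt i j c\<bar>)"
    using assms by (intro member_le_sum[where f="\<lambda>j. \<Sum>c<N. \<bar>nu i j c - mt i j c\<bar>"] sum_nonneg) auto
  also have "\<dots> \<le> Dm N mt nu"
    unfolding Dm_def using assms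
    by (intro member_le_sum[where f="\<lambda>i. \<Sum>j<N. \<Sum>c<N. \<bar>nu i j c - mt i j c\<bar>"] sum_nonneg) auto
  finally show ?thesis .
qed

lemma cont_Dm: "continuous_on UNIV (\<lambda>\<mu>. Dm N mt (act q m g \<mu>))"
  unfolding Dm_def by (intro continuous_intros cont_act)

lemma seq_extract:
  assumes conv: "V_conv q m \<mu>s mt" and mt: "mt \<in> V_space q m" and mus: "\<And>n. \<mu>s n \<in> V_space q m"
  shows "\<exists>gs. (\<forall>n. gs n \<in> grp q m) \<and> (\<forall>i j c. (\<lambda>n. act q m (gs n) (\<mu>s n) i j c) \<longlonglongrightarrow> mt i j c)"
proof -
  define N where "N = q + m"
  define S where "S \<epsilon> = {\<mu> \<in> V_space q m. \<exists>g\<in>grp q m. Dm N mt (act q m g \<mu>) < \<epsilon>}" for \<epsilon>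
  have opn: "openin (top_of_set (V_space q m)) (S \<epsilon>)" for \<epsilon>
  proof -
    have "open (\<Union>g\<in>grp q m. {\<mu>. Dm N mt (act q m g \<mu>) < \<epsilon>})"
      by (intro open_UN ballI open_Collect_less cont_Dm continuous_on_const)
    moreover have "S \<epsilon> = V_space q m \<inter> (\<Union>g\<in>grp q m. {\<mu>. Dm N mt (act q m g \<mu>) < \<epsilon>})"
      unfolding S_def by auto
    ultimately show ?thesis unfolding openin_open by blast
  qed
  have sat: "saturated q m (S \<epsilon>)" for \<epsilon>
    unfolding saturated_def
  proof (intro ballI)
    fix \<mu> h assume mu: "\<mu> \<in> S \<epsilon>" and h: "h \<in> grp q m"
    then obtain g where g: "g \<in> grp q m" "Dm N mt (act q m g \<mu>) < \<epsilon>" "\<mu> \<in> V_space q m" unfolding S_def by blast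
    obtain g' where g': "g' \<in> grp q m" "\<forall>\<mu>. act q m g' (act q m h \<mu>) = act q m g \<mu>" using grp_quot[OF g(1) h] by blast
    have "Dm N mt (act q m g' (act q m h \<mu>)) < \<epsilon>" using g' g by simp
    then show "act q m h \<mu> \<in> S \<epsilon>" unfolding S_def using act_V[OF h g(3)] g'(1) by blast
  qed
  have mem: "mt \<in> S \<epsilon>" if "\<epsilon> > 0" for \<epsilon>
  proof -
    have "Dm N mt (act q m (gel q m idm idm idm) mt) < \<epsilon>" using act_id[OF mt] Dm_self that by simp
    then show ?thesis unfolding S_def using mt id_grp by blast
  qed
  have ev: "\<forall>\<^sub>F n in sequentially. \<mu>s n \<in> S \<epsilon>" if "\<epsilon> > 0" for \<epsilon>
    using conv opn sat mem[OF that] unfolding V_conv_def by blast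
  define e where "e n = Inf ((\<lambda>g. Dm N mt (act q m g (\<mu>s n))) ` grp q m)" for n
  have ne: "(\<lambda>g. Dm N mt (act q m g (\<mu>s n))) ` grp q m \<noteq> {}" for n using id_grp by blast
  have bdd: "bdd_below ((\<lambda>g. Dm N mt (act q m g (\<mu>s n))) ` grp q m)" for n
    using Dm_nonneg by (intro bdd_belowI) auto
  have e0: "0 \<le> e n" for n unfolding e_def using ne by (intro cInf_greatest) (auto simp: Dm_nonneg)
  have elim: "e \<longlonglongrightarrow> 0"
  proof (rule order_tendstoI)
    fix a :: real assume a: "a < 0"
    have "a < e n" for n using e0[of n] a by linarith
    then show "\<forall>\<^sub>F n in sequentially. a < e n" by simp
  next
    fix a :: real assume a: "0 < a"
    show "\<forall>\<^sub>F n in sequentially. e n < a"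
      using ev[OF a]
    proof (rule eventually_mono)
      fix n assume "\<mu>s n \<in> S a"
      then obtain g where "g \<in> grp q m" "Dm N mt (act q m g (\<mu>s n)) < a" unfolding S_def by blast
      then show "e n < a" unfolding e_def using bdd by (meson cInf_lower image_eqI le_less_trans)
    qed
  qed
  have "\<forall>n. \<exists>g. g \<in> grp q m \<and> Dm N mt (act q m g (\<mu>s n)) < e n + inverse (real (Suc n))"
  proof
    fix n
    have "Inf ((\<lambda>g. Dm N mt (act q m g (\<mu>s n))) ` grp q m) < e n + inverse (real (Suc n))"
      unfolding e_def by simp
    then show "\<exists>g. g \<in> grp q m \<and> Dm N mt (act q m g (\<mu>s n)) < e n + inverse (real (Suc n))"
      using cInf_lessD[OF ne] by blast
  qed
  then obtain gs where gs: "\<And>n. gs n \<in> grp q m" "\<And>n. Dm N mt (act q m (gs n) (\<mu>s n)) < e n + inverse (real (Suc n))"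
    by metis
  have Dlim: "(\<lambda>n. Dm N mt (act q m (gs n) (\<mu>s n))) \<longlonglongrightarrow> 0"
  proof (rule tendsto_sandwich[of "\<lambda>n. 0" _ _ "\<lambda>n. e n + inverse (real (Suc n))"])
    show "(\<lambda>n. e n + inverse (real (Suc n))) \<longlonglongrightarrow> 0"
      using tendsto_add[OF elim LIMSEQ_inverse_real_of_nat] by simp
    show "\<forall>\<^sub>F n in sequentially. Dm N mt (act q m (gs n) (\<mu>s n)) \<le> e n + inverse (real (Suc n))"
      using less_imp_le[OF gs(2)] by (intro always_eventually) blast
  qed (auto simp: Dm_nonneg)
  have "(\<lambda>n. act q m (gs n) (\<mu>s n) i j c) \<longlonglongrightarrow> mt i j c" for i j c
  proof (cases "i < N \<and> j < N \<and> c < N")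
    case True
    have "(\<lambda>n. act q m (gs n) (\<mu>s n) i j c - mt i j c) \<longlonglongrightarrow> 0"
      by (rule Lim_null_comparison[OF _ Dlim]) (use True Dm_coord in auto)
    then show ?thesis by (simp add: LIM_zero_iff)
  next
    case False
    have "act q m (gs n) (\<mu>s n) i j c = 0" for n
      using act_V[OF gs(1) mus] False unfolding V_space_def N_def by blast
    moreover have "mt i j c = 0" using mt False unfolding V_space_def N_def by blast
    ultimately show ?thesis by simp
  qed
  then show ?thesis using gs(1) by blast
qed


lemma part1_core:
  assumes Vc: "V_conv q m \<mu>s mt" and mt: "mt \<in> V_space q m" and mus: "\<And>n. \<mu>s n \<in> V_space q m"
    and B': "orth m B'"
    and rel: "\<And>k l. set l \<subseteq> {..<m} \<Longrightarrow> Rmk q' m k nu l = act_t m B' (Rmk q m k mt) l"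
  shows "inf_conv q m \<mu>s q' nu"
proof -
  obtain gs where gs: "\<And>n. gs n \<in> grp q m" "\<And>i j c. (\<lambda>n. act q m (gs n) (\<mu>s n) i j c) \<longlonglongrightarrow> mt i j c"
    using seq_extract[OF Vc mt mus] by blast
  have "\<forall>n. \<exists>p. gs n = gel q m (fst p) (fst (snd p)) (snd (snd p)) \<and> is_inverse_pair q (fst p) (fst (snd p)) \<and> orth m (snd (snd p))"
  proof
    fix n
    obtain A Ai B where "gs n = gel q m A Ai B \<and> is_inverse_pair q A Ai \<and> orth m B" using grp_elem[OF gs(1)] by blast
    then show "\<exists>p. gs n = gel q m (fst p) (fst (snd p)) (snd (snd p)) \<and> is_inverse_pair q (fst p) (fst (snd p)) \<and> orth m (snd (snd p))"
      by (intro exI[of _ "(A, Ai, B)"]) simp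
  qed
  then obtain P where P: "\<And>n. gs n = gel q m (fst (P n)) (fst (snd (P n))) (snd (snd (P n)))"
     "\<And>n. is_inverse_pair q (fst (P n)) (fst (snd (P n)))" "\<And>n. orth m (snd (snd (P n)))"
    by metis
  define Bs where "Bs n = snd (snd (P n))" for n
  define a where "a n = mm m B' (Bs n)" for n
  have orth_a: "orth m (a n)" for n unfolding a_def Bs_def by (rule orth_mm[OF B' P(3)])
  have lim: "(\<lambda>n. act_t m (a n) (Rmk q m k (\<mu>s n)) l) \<longlonglongrightarrow> Rmk q' m k nu l" if l: "set l \<subseteq> {..<m}" for k l
  proof -
    have eq: "act_t m (a n) (Rmk q m k (\<mu>s n)) l = act_t m B' (Rmk q m k (act q m (gs n) (\<mu>s n))) l" for n
    proof -
      have "act_t m (a n) (Rmk q m k (\<mu>s n)) l = act_t m B' (act_t m (Bs n) (Rmk q m k (\<mu>s n))) l"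
        unfolding a_def by (rule act_t_comp)
      also have "\<dots> = act_t m B' (Rmk q m k (act q m (gs n) (\<mu>s n))) l"
      proof (rule act_t_cong)
        fix ys assume "length ys = length l" "set ys \<subseteq> {..<m}"
        then show "act_t m (Bs n) (Rmk q m k (\<mu>s n)) ys = Rmk q m k (act q m (gs n) (\<mu>s n)) ys"
          unfolding Bs_def P(1)[of n] using Rmk_equiv[OF P(3) P(2)] by simp
      qed
      finally show ?thesis .
    qed
    have "(\<lambda>n. act_t m B' (Rmk q m k (act q m (gs n) (\<mu>s n))) l) \<longlonglongrightarrow> act_t m B' (Rmk q m k mt) l"
      by (intro act_t_tendsto Rmk_tendsto gs(2))
    then show ?thesis unfolding eq rel[OF l] .
  qed
  show ?thesis unfolding inf_conv_def using orth_a lim by blast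
qed

lemma idm_lam: "(\<lambda>i j. if i = j then 1 else 0 :: real) = idm"
  by (intro ext) (simp add: idm_def)

lemma part1:
  assumes H: "\<And>n. Hloc q m (\<mu>s n)" and ac: "alg_conv q m \<mu>s q' nu"
  shows "inf_conv q m \<mu>s q' nu"
proof -
  have mus: "\<mu>s n \<in> V_space q m" for n using H[of n] unfolding Hloc_def H12_def by blast
  have Hnu: "Hloc q' m nu" using ac unfolding alg_conv_def by blast
  from ac consider (a) "q' = q" "V_conv q m \<mu>s nu"
    | (b) mt where "q' < q" "H12 q m mt" "V_conv q m \<mu>s mt" "restr_rel q m mt q' nu"
    unfolding alg_conv_def by blast
  then show ?thesis
  proof cases
    case a
    have nuV: "nu \<in> V_space q m" using Hnu a(1) unfolding Hloc_def H12_def by blast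
    show ?thesis
      by (rule part1_core[OF a(2) nuV mus orth_id]) (simp add: a(1) act_t_id)
  next
    case b
    have mtV: "mt \<in> V_space q m" using b(2) unfolding H12_def by blast
    obtain A Ai where qq: "q' \<le> q" and A: "is_inverse_pair q A Ai"
      and ker: "\<forall>z. (\<forall>i\<ge>q. z i = 0) \<longrightarrow> (kills_m q m (act q m (gel q m A Ai idm) mt) z \<longleftrightarrow> (\<forall>i\<ge>q - q'. z i = 0))"
      and sc: "same_class q' m (\<lambda>i j k. if i < q' + m \<and> j < q' + m \<and> k < q' + m
                 then act q m (gel q m A Ai idm) mt (i + (q - q')) (j + (q - q')) (k + (q - q')) else 0) nu"
      using b(4) unfolding restr_rel_def Let_def idm_lam transp_idm by blast
    define \<rho> where "\<rho> = act q m (gel q m A Ai idm) mt"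
    define d where "d = q - q'"
    define \<rho>' where "\<rho>' = (\<lambda>i j k. if i < q' + m \<and> j < q' + m \<and> k < q' + m then \<rho> (i + d) (j + d) (k + d) else 0)"
    obtain g where g: "g \<in> grp q' m" "act q' m g \<rho>' = nu"
      using sc unfolding same_class_def \<rho>'_def \<rho>_def d_def by blast
    obtain C Ci E where gC: "g = gel q' m C Ci E" "is_inverse_pair q' C Ci" "orth m E" using grp_elem[OF g(1)] by blast
    have kill: "\<rho> i (q+b) (q+c) = 0" if "i < d" "b < m" "c < m" for i b c
    proof -
      define z where "z = (\<lambda>i'. if i' = i then 1 else (0::real))"
      have "\<forall>i'\<ge>q. z i' = 0" using that unfolding z_def d_def by auto
      moreover have "\<forall>i'\<ge>d. z i' = 0" using that unfolding z_def by auto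
      ultimately have "kills_m q m \<rho> z" using ker unfolding \<rho>_def d_def by blast
      then have "(\<Sum>i'<q. z i' * \<rho> i' (q+b) (q+c)) = 0" using that unfolding kills_m_def by auto
      moreover have "(\<Sum>i'<q. z i' * \<rho> i' (q+b) (q+c)) = \<rho> i (q+b) (q+c)"
      proof -
        have "(\<Sum>i'<q. z i' * \<rho> i' (q+b) (q+c)) = (\<Sum>i'<q. if i' = i then \<rho> i' (q+b) (q+c) else 0)"
          by (intro sum.cong) (auto simp: z_def)
        also have "\<dots> = \<rho> i (q+b) (q+c)" using that unfolding d_def by simp
        finally show ?thesis .
      qed
      ultimately show ?thesis by simp
    qed
    have rel: "Rmk q' m k nu l = act_t m E (Rmk q m k mt) l" if l: "set l \<subseteq> {..<m}" for k l
    proof -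
      have "Rmk q' m k nu l = act_t m E (Rmk q' m k \<rho>') l"
        using Rmk_equiv[OF gC(3) gC(2) l, of k \<rho>'] g(2) gC(1) by simp
      also have "\<dots> = act_t m E (Rmk q m k mt) l"
      proof (rule act_t_cong)
        fix ys assume ys: "length ys = length l" "set ys \<subseteq> {..<m}"
        have "Rmk q' m k \<rho>' ys = Rmk q m k \<rho> ys"
          by (rule Rmk_restr[OF qq d_def kill \<rho>'_def ys(2), symmetric]) auto
        also have "\<dots> = Rmk q m k mt ys" unfolding \<rho>_def by (rule Rmk_GL_inv[OF A ys(2)])
        finally show "Rmk q' m k \<rho>' ys = Rmk q m k mt ys" .
      qed
      finally show ?thesis .
    qed
    show ?thesis by (rule part1_core[OF b(3) mtV mus gC(3) rel])
  qed
qed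


definition muE :: brk where
  "muE i j k = (if i = 0 \<and> j = 1 \<and> k = 2 then 1 else if i = 1 \<and> j = 0 \<and> k = 2 then -1
     else if i = 0 \<and> j = 2 \<and> k = 1 then -1 else if i = 2 \<and> j = 0 \<and> k = 1 then 1 else 0)"

definition zb :: brk where "zb i j k = 0"

lemma all3: "(\<forall>i<(3::nat). P i) \<longleftrightarrow> P 0 \<and> P 1 \<and> P 2"
  by (auto simp: numeral_3_eq_3 numeral_2_eq_2 less_Suc_eq)

lemma sum3_expand: "(\<Sum>d<(3::nat). f d) = f 0 + f 1 + f 2"
  by (simp add: numeral_3_eq_3 numeral_2_eq_2)

lemma muE_V: "muE \<in> V_space 0 3"
  unfolding V_space_def muE_def by auto

lemma muE_jacobi: "jacobi 3 muE"
  unfolding jacobi_def all3 sum3_expand by (simp add: muE_def)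

lemma Hloc_muE: "Hloc 0 3 muE"
  unfolding Hloc_def H12_def kills_m_def using muE_V muE_jacobi by simp

lemma Hloc_zb: "Hloc 0 3 zb"
  unfolding Hloc_def H12_def kills_m_def V_space_def jacobi_def zb_def by simp

lemma Rmk_zero:
  assumes "\<And>x y z w. rm0 q m \<mu> x y z w = 0"
  shows "Rmk q m k \<mu> l = 0"
proof (induction k arbitrary: l)
  case 0 then show ?case by (simp only: Rmk0_alt) (simp add: assms)
next
  case (Suc k) then show ?case unfolding Rmk_Suc_Dop Dop_def by (simp split: list.split)
qed

lemma rm0_zb: "rm0 0 3 zb x y z w = 0"
  unfolding rm0_def lam_def zb_def by simp

lemma lam_muE: "lam 0 3 muE a b c = (if a = 0 then (if b = 1 \<and> c = 2 then 1 else if b = 2 \<and> c = 1 then -1 else 0) else 0)"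
  unfolding lam_def muE_def by auto

lemma rm0_muE: "rm0 0 3 muE x y z w = 0"
proof -
  have t1: "muE x y c * lam 0 3 muE c z w = 0" for c
    by (cases "c = 0") (auto simp: lam_muE muE_def)
  have t3: "lam 0 3 muE x v w * lam 0 3 muE y z v - lam 0 3 muE y v w * lam 0 3 muE x z v = 0" for v
    by (cases "x = 0"; cases "y = 0") (auto simp: lam_muE)
  show ?thesis unfolding rm0_def by (simp only: add_0 t1 t3) simp
qed

lemma act_zb: "act q m g zb = zb"
  unfolding act_def zb_def by (intro ext) simp

lemma inf_conv_ex: "inf_conv 0 3 (\<lambda>n. zb) 0 muE"
proof -
  have z1: "Rmk 0 3 k zb l = 0" for k l by (rule Rmk_zero) (rule rm0_zb)
  have z2: "Rmk 0 3 k muE l = 0" for k l by (rule Rmk_zero) (rule rm0_muE)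
  have a0: "act_t 3 idm (Rmk 0 3 k zb) l = 0" for k l
    unfolding z1 by (rule act_t_zero)
  show ?thesis unfolding inf_conv_def z2
    by (intro allI impI exI[of _ "\<lambda>n. idm"] conjI) (simp_all add: orth_id a0)
qed

lemma not_V_conv: "\<not> V_conv 0 3 (\<lambda>n. zb) muE"
proof
  assume conv: "V_conv 0 3 (\<lambda>n. zb) muE"
  define W where "W = {\<mu> \<in> V_space 0 3. \<mu> \<noteq> zb}"
  have "open (\<Union>a. \<Union>b. \<Union>c. {\<mu>::brk. 0 < \<bar>\<mu> a b c\<bar>})"
    by (intro open_UN ballI open_Collect_less continuous_on_const continuous_intros cont_eval)
  moreover have "W = V_space 0 3 \<inter> (\<Union>a. \<Union>b. \<Union>c. {\<mu>::brk. 0 < \<bar>\<mu> a b c\<bar>})"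
    unfolding W_def zb_def by (auto simp: fun_eq_iff)
  ultimately have opn: "openin (top_of_set (V_space 0 3)) W" unfolding openin_open by blast
  have sat: "saturated 0 3 W"
    unfolding saturated_def
  proof (intro ballI)
    fix \<mu> h assume mu: "\<mu> \<in> W" and h: "h \<in> grp 0 3"
    have muV: "\<mu> \<in> V_space 0 3" using mu W_def by blast
    obtain g' where g': "g' \<in> grp 0 3" "\<forall>\<mu>. act 0 3 g' (act 0 3 h \<mu>) = act 0 3 (gel 0 3 idm idm idm) \<mu>"
      using grp_quot[OF id_grp h] by blast
    have "act 0 3 h \<mu> \<noteq> zb"
    proof
      assume "act 0 3 h \<mu> = zb"
      then have "act 0 3 g' zb = \<mu>" using g'(2) act_id[OF muV] by metis
      then show False using mu unfolding W_def act_zb by simp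
    qed
    then show "act 0 3 h \<mu> \<in> W" unfolding W_def using act_V[OF h muV] by blast
  qed
  have mem: "muE \<in> W" unfolding W_def using muE_V by (auto simp: fun_eq_iff muE_def zb_def)
  have "\<forall>\<^sub>F n in sequentially. zb \<in> W" using conv opn sat mem unfolding V_conv_def by blast
  moreover have "zb \<notin> W" unfolding W_def by simp
  ultimately show False by simp
qed

lemma part2: "\<exists>m q \<mu>s q' \<nu>. 1 \<le> m \<and> 2 * q \<le> m * (m - 1) \<and> (\<forall>n. Hloc q m (\<mu>s n)) \<and>
            Hloc q' m \<nu> \<and> inf_conv q m \<mu>s q' \<nu> \<and> \<not> alg_conv q m \<mu>s q' \<nu>"
proof (intro exI conjI)
  show "\<not> alg_conv 0 3 (\<lambda>n. zb) 0 muE" unfolding alg_conv_def using not_V_conv by simp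
qed (auto simp: Hloc_zb Hloc_muE inf_conv_ex)


theorem proposition3p5:
  shows "(\<forall>m q \<mu>s q' \<nu>. 1 \<le> m \<and> 2 * q \<le> m * (m - 1) \<and> (\<forall>n. Hloc q m (\<mu>s n)) \<and>
            Hloc q' m \<nu> \<and> alg_conv q m \<mu>s q' \<nu> \<longrightarrow> inf_conv q m \<mu>s q' \<nu>)
       \<and> (\<exists>m q \<mu>s q' \<nu>. 1 \<le> m \<and> 2 * q \<le> m * (m - 1) \<and> (\<forall>n. Hloc q m (\<mu>s n)) \<and>
            Hloc q' m \<nu> \<and> inf_conv q m \<mu>s q' \<nu> \<and> \<not> alg_conv q m \<mu>s q' \<nu>)"
    using part1 part2 by blast

end
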